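(* Let $G$ be a countable graph with maximal degree $\le\mathrm{D}$ and $H=\mathcal{A}+V$ on $\ell^2(G)$, with $\mathcal{A}$ the adjacency matrix and $V$ a bounded real potential. Fix $o\in G$, let $|x|=d(x,o)$ be the graph distance and $(x^m\psi)(x)=|x|^m\psi(x)$. Then for each $m\in\mathbb{N}$ there are polynomials $p_0,\dots,p_m$ (depending on $m$ but not on $\psi$ or $t$), with $p_k$ of degree $k$, $p_0\equiv1$, and the leading term of $p_m(t)$ equal to $\mathrm{D}^mt^m$, such that for every $t\ge0$ and every $\psi\in\ell^2(G)$ with $\|x^m\psi\|<\infty$, $$\|x^me^{-\mathrm{i}tH}\psi\|\le\sum_{r=0}^mp_{m-r}(t)\|x^r\psi\|.$$ In particular, $\limsup_{t\to+\infty}\|x^me^{-\mathrm{i}tH}\psi\|/t^m\le\mathrm{D}^m\|\psi\|$. *)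

theory Defs
  imports "HOL-Analysis.Analysis" "HOL-Computational_Algebra.Polynomial"
begin

definition edges :: "('v \<Rightarrow> 'v \<Rightarrow> bool) \<Rightarrow> ('v \<times> 'v) set" where
  "edges E = {(a, b). E a b}"

definition gdist :: "('v \<Rightarrow> 'v \<Rightarrow> bool) \<Rightarrow> 'v \<Rightarrow> 'v \<Rightarrow> nat" where
  "gdist E x y = (LEAST n. (x, y) \<in> edges E ^^ n)"

definition in_l2 :: "('v \<Rightarrow> complex) \<Rightarrow> bool" where
  "in_l2 \<psi> \<longleftrightarrow> (\<lambda>x. (cmod (\<psi> x))\<^sup>2) summable_on UNIV"

definition l2norm :: "('v \<Rightarrow> complex) \<Rightarrow> real" where
  "l2norm \<psi> = sqrt (\<Sum>\<^sub>\<infinity>x. (cmod (\<psi> x))\<^sup>2)"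

definition wfin :: "('v \<Rightarrow> 'v \<Rightarrow> bool) \<Rightarrow> 'v \<Rightarrow> nat \<Rightarrow> ('v \<Rightarrow> complex) \<Rightarrow> bool" where
  "wfin E ob m \<psi> \<longleftrightarrow>
     (\<lambda>x. (real (gdist E x ob)) ^ (2 * m) * (cmod (\<psi> x))\<^sup>2) summable_on UNIV"

definition wnorm :: "('v \<Rightarrow> 'v \<Rightarrow> bool) \<Rightarrow> 'v \<Rightarrow> nat \<Rightarrow> ('v \<Rightarrow> complex) \<Rightarrow> real" where
  "wnorm E ob m \<psi> =
     sqrt (\<Sum>\<^sub>\<infinity>x. (real (gdist E x ob)) ^ (2 * m) * (cmod (\<psi> x))\<^sup>2)"

definition adjop :: "('v \<Rightarrow> 'v \<Rightarrow> bool) \<Rightarrow> ('v \<Rightarrow> complex) \<Rightarrow> 'v \<Rightarrow> complex" where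
  "adjop E \<psi> x = (\<Sum>y\<in>{y. E x y}. \<psi> y)"

definition ham :: "('v \<Rightarrow> 'v \<Rightarrow> bool) \<Rightarrow> ('v \<Rightarrow> real) \<Rightarrow> ('v \<Rightarrow> complex) \<Rightarrow> 'v \<Rightarrow> complex" where
  "ham E V \<psi> x = adjop E \<psi> x + complex_of_real (V x) * \<psi> x"

text \<open>e^{-itH} psi, via the exponential series of the bounded operator H
  (evaluated pointwise; the series converges in l^2 and hence pointwise).\<close>
definition evol :: "('v \<Rightarrow> 'v \<Rightarrow> bool) \<Rightarrow> ('v \<Rightarrow> real) \<Rightarrow> real \<Rightarrow> ('v \<Rightarrow> complex) \<Rightarrow> 'v \<Rightarrow> complex" where
  "evol E V t \<psi> x =
     (\<Sum>n. ((- \<i> * complex_of_real t) ^ n / of_nat (fact n)) * ((ham E V ^^ n) \<psi>) x)"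

end

theory Submission
  imports Defs "HOL-Analysis.Analysis"
begin


definition sqs :: "('v \<Rightarrow> complex) \<Rightarrow> bool" where
  "sqs f \<longleftrightarrow> (\<lambda>x. (cmod (f x))^2) summable_on UNIV"

lemma sqs_0[simp]: "sqs (\<lambda>_. 0)" by (simp add: sqs_def)

lemma sq_add_le: "(cmod (a + b))^2 \<le> 2 * (cmod a)^2 + 2 * (cmod b)^2"
proof -
  have "(cmod (a + b))^2 \<le> (cmod a + cmod b)^2"
    by (simp add: power_mono norm_triangle_ineq)
  also have "\<dots> \<le> 2 * (cmod a)^2 + 2 * (cmod b)^2"
  proof -
    have "0 \<le> (cmod a - cmod b)^2" by simp
    then show ?thesis by (simp add: power2_eq_square algebra_simps)
  qed
  finally show ?thesis .
qed

lemma sqs_mono: "sqs f \<Longrightarrow> (\<And>x. cmod (g x) \<le> cmod (f x)) \<Longrightarrow> sqs g"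
  unfolding sqs_def
  by (rule summable_on_comparison_test[where f="\<lambda>x. (cmod (f x))^2"]) (auto intro: power_mono)

lemma sqs_add: "sqs f \<Longrightarrow> sqs g \<Longrightarrow> sqs (\<lambda>x. f x + g x)"
  unfolding sqs_def
  apply (rule summable_on_comparison_test[where f="\<lambda>x. 2 * (cmod (f x))^2 + 2 * (cmod (g x))^2"])
    apply (intro summable_on_add summable_on_cmult_right; assumption)
  using sq_add_le by auto

lemma sqs_cmult: "sqs f \<Longrightarrow> sqs (\<lambda>x. c * f x)"
  unfolding sqs_def by (simp add: norm_mult power_mult_distrib summable_on_cmult_right)

lemma sqs_uminus: "sqs f \<Longrightarrow> sqs (\<lambda>x. - f x)"
  unfolding sqs_def by simp

lemma sqs_diff: "sqs f \<Longrightarrow> sqs g \<Longrightarrow> sqs (\<lambda>x. f x - g x)"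
  using sqs_add[of f "\<lambda>x. - g x"] sqs_uminus[of g] by simp

lemma prod_le_sq: "cmod (cnj a * b) \<le> ((cmod a)^2 + (cmod b)^2) / 2"
proof -
  have "0 \<le> (cmod a - cmod b)^2" by simp
  then show ?thesis by (simp add: norm_mult power2_eq_square algebra_simps)
qed

lemma prod_le_sq2: "cmod (cnj a * b) \<le> (cmod a)^2 + (cmod b)^2"
proof -
  have "0 \<le> (cmod a - cmod b)^2" by simp
  then have h1: "2*(cmod a * cmod b) \<le> (cmod a)^2 + (cmod b)^2"
    by (simp add: power2_eq_square algebra_simps)
  have h2: "0 \<le> cmod a * cmod b" by simp
  have "cmod (cnj a * b) = cmod a * cmod b" by (simp add: norm_mult)
  with h1 h2 show ?thesis by linarith
qed

lemma sqs_inner_abs: "sqs f \<Longrightarrow> sqs g \<Longrightarrow> (\<lambda>x. cmod (cnj (f x) * g x)) summable_on UNIV"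
  unfolding sqs_def
  apply (rule summable_on_comparison_test[where f="\<lambda>x. (cmod (f x))^2 + (cmod (g x))^2"])
  apply (auto intro!: summable_on_add)
  using prod_le_sq2 by auto

lemma sqs_inner: "sqs f \<Longrightarrow> sqs g \<Longrightarrow> (\<lambda>x. cnj (f x) * g x) summable_on UNIV"
  by (rule abs_summable_summable) (rule sqs_inner_abs)

lemma sqs_inner_Re: "sqs f \<Longrightarrow> sqs g \<Longrightarrow> (\<lambda>x. Re (cnj (f x) * g x)) summable_on UNIV"
  by (rule summable_on_Re) (rule sqs_inner)

typedef 'v l2 = "{f::'v \<Rightarrow> complex. sqs f}"
  morphisms vec Abs_l2
  by (rule exI[of _ "\<lambda>_. 0"]) simp

setup_lifting type_definition_l2

lemma sqs_vec[simp]: "sqs (vec f)" using vec[of f] by simp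

instantiation l2 :: (type) real_inner begin
lift_definition zero_l2 :: "'a l2" is "\<lambda>_. 0" by simp
lift_definition plus_l2 :: "'a l2 \<Rightarrow> 'a l2 \<Rightarrow> 'a l2" is "\<lambda>f g x. f x + g x" by (simp add: sqs_add)
lift_definition uminus_l2 :: "'a l2 \<Rightarrow> 'a l2" is "\<lambda>f x. - f x" by (simp add: sqs_uminus)
lift_definition minus_l2 :: "'a l2 \<Rightarrow> 'a l2 \<Rightarrow> 'a l2" is "\<lambda>f g x. f x - g x" by (simp add: sqs_diff)
lift_definition scaleR_l2 :: "real \<Rightarrow> 'a l2 \<Rightarrow> 'a l2" is "\<lambda>r f x. complex_of_real r * f x" by (simp add: sqs_cmult)
definition inner_l2 :: "'a l2 \<Rightarrow> 'a l2 \<Rightarrow> real" where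
  "inner_l2 f g = (\<Sum>\<^sub>\<infinity>x. Re (cnj (vec f x) * vec g x))"
definition norm_l2 :: "'a l2 \<Rightarrow> real" where
  "norm_l2 f = sqrt (\<Sum>\<^sub>\<infinity>x. (cmod (vec f x))^2)"
definition dist_l2 :: "'a l2 \<Rightarrow> 'a l2 \<Rightarrow> real" where "dist_l2 f g = norm (f - g)"
definition sgn_l2 :: "'a l2 \<Rightarrow> 'a l2" where "sgn_l2 f = inverse (norm f) *\<^sub>R f"
definition uniformity_l2 :: "('a l2 \<times> 'a l2) filter" where
  "uniformity_l2 = (INF e\<in>{0<..}. principal {(x, y). dist x y < e})"
definition open_l2 :: "'a l2 set \<Rightarrow> bool" where
  "open_l2 U = (\<forall>x\<in>U. \<forall>\<^sub>F (x', y) in uniformity. x' = x \<longrightarrow> y \<in> U)"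
instance
proof
  fix a b c :: "'a l2" and r s :: real
  show "a + b + c = a + (b + c)" by transfer (simp add: algebra_simps)
  show "a + b = b + a" by transfer (simp add: algebra_simps)
  show "0 + a = a" by transfer simp
  show "- a + a = 0" by transfer simp
  show "a - b = a + - b" by transfer simp
  show "r *\<^sub>R (a + b) = r *\<^sub>R a + r *\<^sub>R b" by transfer (simp add: algebra_simps)
  show "(r + s) *\<^sub>R a = r *\<^sub>R a + s *\<^sub>R a" by transfer (simp add: algebra_simps)
  show "r *\<^sub>R s *\<^sub>R a = (r * s) *\<^sub>R a" by transfer (simp add: algebra_simps)
  show "1 *\<^sub>R a = a" by transfer simp
  show "dist a b = norm (a - b)" by (simp add: dist_l2_def)
  show "sgn a = inverse (norm a) *\<^sub>R a" by (simp add: sgn_l2_def)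
  show "inner a b = inner b a" unfolding inner_l2_def
    by (rule infsum_cong) (simp add: algebra_simps)
  show "inner (a + b) c = inner a c + inner b c" unfolding inner_l2_def plus_l2.rep_eq
    apply (subst infsum_add[symmetric, OF sqs_inner_Re[OF sqs_vec sqs_vec] sqs_inner_Re[OF sqs_vec sqs_vec]])
    apply (rule infsum_cong)
    apply (simp only: complex_cnj_add distrib_right plus_complex.sel)
    done
  show "inner (r *\<^sub>R a) b = r * inner a b" unfolding inner_l2_def scaleR_l2.rep_eq
  proof -
    have "(\<Sum>\<^sub>\<infinity>x. Re (cnj (complex_of_real r * vec a x) * vec b x)) = (\<Sum>\<^sub>\<infinity>x. r * Re (cnj (vec a x) * vec b x))"
      by (rule infsum_cong) (simp add: algebra_simps)
    then show "(\<Sum>\<^sub>\<infinity>x. Re (cnj (complex_of_real r * vec a x) * vec b x)) = r * (\<Sum>\<^sub>\<infinity>x. Re (cnj (vec a x) * vec b x))"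
      by (simp only: infsum_cmult_right')
  qed
  have ii: "Re (cnj (vec a x) * vec a x) = (cmod (vec a x))^2" for x
    by (simp add: cmod_power2, simp add: power2_eq_square)
  show "0 \<le> inner a a" unfolding inner_l2_def ii by (simp add: infsum_nonneg)
  show "inner a a = 0 \<longleftrightarrow> a = 0"
  proof
    assume "inner a a = 0"
    then have "(cmod (vec a x))^2 = 0" for x
      unfolding inner_l2_def ii
      by (intro nonneg_infsum_le_0D[where A=UNIV]) (use sqs_vec[of a, unfolded sqs_def] in auto)
    then show "a = 0" by transfer auto
  next
    assume "a = 0" then show "inner a a = 0" unfolding inner_l2_def by transfer simp
  qed
  show "norm a = sqrt (inner a a)" unfolding norm_l2_def inner_l2_def ii ..
qed (simp_all add: uniformity_l2_def open_l2_def)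
end


declare plus_l2.rep_eq[simp] minus_l2.rep_eq[simp] uminus_l2.rep_eq[simp] scaleR_l2.rep_eq[simp] zero_l2.rep_eq[simp]

lemma l2_eqI: "(\<And>x. vec f x = vec g x) \<Longrightarrow> f = g"
  by (metis ext vec_inject)

lemma vec_Abs[simp]: "sqs f \<Longrightarrow> vec (Abs_l2 f) = f"
  by (simp add: Abs_l2_inverse)

lemma norm_sq_l2: "(norm f)^2 = (\<Sum>\<^sub>\<infinity>x. (cmod (vec f x))^2)"
  unfolding norm_l2_def by (simp add: infsum_nonneg)

lemma sqs_vec': "(\<lambda>x. (cmod (vec f x))^2) summable_on UNIV"
  using sqs_vec[of f] unfolding sqs_def .

lemma finite_sum_le_norm_sq: "finite F \<Longrightarrow> (\<Sum>x\<in>F. (cmod (vec f x))^2) \<le> (norm f)^2"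
  unfolding norm_sq_l2 by (rule finite_sum_le_infsum) (auto simp: sqs_vec')

lemma vec_le_norm: "cmod (vec f x) \<le> norm f"
proof -
  have "(cmod (vec f x))^2 \<le> (norm f)^2"
    using finite_sum_le_norm_sq[of "{x}" f] by simp
  then show ?thesis by (rule power2_le_imp_le) simp
qed

lemma norm_mono_l2: "(\<And>x. cmod (vec f x) \<le> cmod (vec g x)) \<Longrightarrow> norm f \<le> norm g"
proof -
  assume h: "\<And>x. cmod (vec f x) \<le> cmod (vec g x)"
  have "(norm f)^2 \<le> (norm g)^2" unfolding norm_sq_l2
    by (rule infsum_mono) (auto simp: sqs_vec' h power_mono)
  then show ?thesis by (rule power2_le_imp_le) simp
qed

lemma sqs_bound:
  assumes "\<And>F. finite F \<Longrightarrow> (\<Sum>x\<in>F. (cmod (f x))^2) \<le> C"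
  shows "sqs f" "(\<Sum>\<^sub>\<infinity>x. (cmod (f x))^2) \<le> C"
proof -
  show s: "sqs f" unfolding sqs_def
    by (rule nonneg_bdd_above_summable_on) (use assms in \<open>auto intro!: bdd_aboveI\<close>)
  show "(\<Sum>\<^sub>\<infinity>x. (cmod (f x))^2) \<le> C"
    by (rule infsum_le_finite_sums) (use s assms in \<open>auto simp: sqs_def\<close>)
qed

lemma norm_Abs_l2: "sqs f \<Longrightarrow> norm (Abs_l2 f) = sqrt (\<Sum>\<^sub>\<infinity>x. (cmod (f x))^2)"
  unfolding norm_l2_def by simp

lemma norm_Abs_bound:
  assumes "\<And>F. finite F \<Longrightarrow> (\<Sum>x\<in>F. (cmod (f x))^2) \<le> C^2" "0 \<le> C"
  shows "sqs f" "norm (Abs_l2 f) \<le> C"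
proof -
  show "sqs f" using sqs_bound(1) assms by blast
  then show "norm (Abs_l2 f) \<le> C" using sqs_bound(2)[OF assms(1)] assms(2)
    by (simp add: norm_Abs_l2) (metis abs_of_nonneg real_sqrt_abs real_sqrt_le_mono)
qed

lemma bounded_linear_vec: "bounded_linear (\<lambda>f. vec f x)"
  by (rule bounded_linear_intro[where K=1]) (auto simp: vec_le_norm scaleR_conv_of_real)

instance l2 :: (type) complete_space
proof
  fix X :: "nat \<Rightarrow> 'a l2" assume C: "Cauchy X"
  have cx: "Cauchy (\<lambda>n. vec (X n) x)" for x
  proof (rule CauchyI)
    fix e :: real assume "0 < e"
    then obtain M where M: "\<forall>m\<ge>M. \<forall>n\<ge>M. norm (X m - X n) < e"
      using C CauchyD by blast
    show "\<exists>M. \<forall>m\<ge>M. \<forall>n\<ge>M. norm (vec (X m) x - vec (X n) x) < e"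
    proof (intro exI allI impI)
      fix m n assume "M \<le> m" "M \<le> n"
      then have "norm (X m - X n) < e" using M by blast
      moreover have "cmod (vec (X m - X n) x) \<le> norm (X m - X n)" by (rule vec_le_norm)
      ultimately show "norm (vec (X m) x - vec (X n) x) < e" by simp
    qed
  qed
  define f where "f x = lim (\<lambda>n. vec (X n) x)" for x
  have lim: "(\<lambda>n. vec (X n) x) \<longlonglongrightarrow> f x" for x
    unfolding f_def using cx[of x] by (simp add: Cauchy_convergent_iff convergent_LIMSEQ_iff)
  have key: "\<exists>M. \<forall>n\<ge>M. sqs (\<lambda>x. vec (X n) x - f x) \<and> (\<Sum>\<^sub>\<infinity>x. (cmod (vec (X n) x - f x))^2) \<le> e^2"
    if "0 < e" for e
  proof -
    obtain M where M: "\<forall>m\<ge>M. \<forall>n\<ge>M. norm (X m - X n) < e"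
      using C CauchyD \<open>0 < e\<close> by blast
    show ?thesis
    proof (intro exI allI impI)
      fix n assume "M \<le> n"
      have fs: "(\<Sum>x\<in>F. (cmod (vec (X n) x - f x))^2) \<le> e^2" if "finite F" for F
      proof -
        have "(\<lambda>m. \<Sum>x\<in>F. (cmod (vec (X n) x - vec (X m) x))^2) \<longlonglongrightarrow> (\<Sum>x\<in>F. (cmod (vec (X n) x - f x))^2)"
          by (intro tendsto_intros lim)
        moreover have "\<forall>\<^sub>F m in sequentially. (\<Sum>x\<in>F. (cmod (vec (X n) x - vec (X m) x))^2) \<le> e^2"
        proof (rule eventually_sequentiallyI[of M])
          fix m assume "M \<le> m"
          have "(\<Sum>x\<in>F. (cmod (vec (X n) x - vec (X m) x))^2) = (\<Sum>x\<in>F. (cmod (vec (X n - X m) x))^2)"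
            by simp
          also have "\<dots> \<le> (norm (X n - X m))^2" by (rule finite_sum_le_norm_sq[OF that])
          also have "\<dots> \<le> e^2" using M \<open>M \<le> m\<close> \<open>M \<le> n\<close>
            by (intro power_mono) (auto intro: less_imp_le)
          finally show "(\<Sum>x\<in>F. (cmod (vec (X n) x - vec (X m) x))^2) \<le> e^2" .
        qed
        ultimately show ?thesis by (rule tendsto_upperbound) simp
      qed
      show "sqs (\<lambda>x. vec (X n) x - f x) \<and> (\<Sum>\<^sub>\<infinity>x. (cmod (vec (X n) x - f x))^2) \<le> e^2"
        using sqs_bound[of "\<lambda>x. vec (X n) x - f x", OF fs] by blast
    qed
  qed
  obtain M where "\<forall>n\<ge>M. sqs (\<lambda>x. vec (X n) x - f x)"
    using key[of 1] by auto
  then have "sqs (\<lambda>x. vec (X M) x - f x)" by blast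
  then have "sqs (\<lambda>x. vec (X M) x - (vec (X M) x - f x))" by (rule sqs_diff[OF sqs_vec])
  then have sf: "sqs f" by simp
  have "X \<longlonglongrightarrow> Abs_l2 f"
  proof (rule LIMSEQ_I)
    fix r :: real assume "0 < r"
    then obtain M where M: "\<forall>n\<ge>M. sqs (\<lambda>x. vec (X n) x - f x) \<and> (\<Sum>\<^sub>\<infinity>x. (cmod (vec (X n) x - f x))^2) \<le> (r/2)^2"
      using key[of "r/2"] by auto
    show "\<exists>no. \<forall>n\<ge>no. norm (X n - Abs_l2 f) < r"
    proof (intro exI allI impI)
      fix n assume "M \<le> n"
      have "(norm (X n - Abs_l2 f))^2 = (\<Sum>\<^sub>\<infinity>x. (cmod (vec (X n) x - f x))^2)"
        unfolding norm_sq_l2 using sf by simp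
      also have "\<dots> \<le> (r/2)^2" using M \<open>M \<le> n\<close> by auto
      finally have "norm (X n - Abs_l2 f) \<le> r/2"
        by (rule power2_le_imp_le) (use \<open>0 < r\<close> in auto)
      then show "norm (X n - Abs_l2 f) < r" using \<open>0 < r\<close> by simp
    qed
  qed
  then show "convergent X" by (rule convergentI)
qed


instance l2 :: (type) banach ..


lemma pow_diff_le:
  fixes a b :: real and m :: nat
  assumes "0 \<le> a" "0 \<le> b" "\<bar>a - b\<bar> \<le> 1"
  shows "\<bar>a^m - b^m\<bar> \<le> (\<Sum>k<m. real (m choose k) * b^k)"
proof (cases "b \<le> a")
  case True
  have "a^m \<le> (b+1)^m" using assms True by (intro power_mono) auto
  also have "(b+1)^m = (\<Sum>k\<le>m. real (m choose k) * b^k)"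
    using binomial_ring[of b 1 m] by simp
  also have "\<dots> = (\<Sum>k<m. real (m choose k) * b^k) + b^m"
    by (simp add: lessThan_Suc_atMost[symmetric])
  finally have "a^m - b^m \<le> (\<Sum>k<m. real (m choose k) * b^k)" by simp
  moreover have "b^m \<le> a^m" using True assms by (simp add: power_mono)
  ultimately show ?thesis by simp
next
  case False
  then have ab: "a < b" by simp
  have "b^m - a^m = (b - a) * (\<Sum>i<m. a^(m - Suc i) * b^i)" by (rule power_diff_sumr2)
  also have "\<dots> \<le> 1 * (\<Sum>i<m. b^(m - Suc i) * b^i)"
    apply (rule mult_mono)
    using assms ab by (auto intro!: sum_mono mult_right_mono power_mono sum_nonneg)
  also have "(\<Sum>i<m. b^(m - Suc i) * b^i) = (\<Sum>i<m. b^(m-1))"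
    by (rule sum.cong) (auto simp: power_add[symmetric])
  also have "\<dots> = real m * b^(m-1)" by simp
  also have "\<dots> \<le> (\<Sum>k<m. real (m choose k) * b^k)"
  proof (cases m)
    case 0 then show ?thesis by simp
  next
    case (Suc n)
    have "real m * b^(m-1) = real (m choose n) * b^n" using Suc by simp
    also have "\<dots> \<le> (\<Sum>k<m. real (m choose k) * b^k)" using Suc assms
      by (intro member_le_sum) auto
    finally show ?thesis .
  qed
  finally have "b^m - a^m \<le> (\<Sum>k<m. real (m choose k) * b^k)" by simp
  moreover have "a^m \<le> b^m" using ab assms by (simp add: power_mono)
  ultimately show ?thesis by simp
qed

locale gr =
  fixes E :: "'v \<Rightarrow> 'v \<Rightarrow> bool" and V :: "'v \<Rightarrow> real" and D :: nat and B :: real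
  assumes sym: "\<And>x y. E x y \<Longrightarrow> E y x"
    and finN: "\<And>x. finite {y. E x y}"
    and degN: "\<And>x. card {y. E x y} \<le> D"
    and VB: "\<And>x. \<bar>V x\<bar> \<le> B"
begin

lemma B_nonneg: "0 \<le> B" using VB[of undefined] by simp

lemma adj_sq_le: "(cmod (adjop E f x))^2 \<le> real D * (\<Sum>y\<in>{y. E x y}. (cmod (f y))^2)"
proof -
  have "cmod (adjop E f x) \<le> (\<Sum>y\<in>{y. E x y}. cmod (f y))" unfolding adjop_def by (rule norm_sum)
  then have "(cmod (adjop E f x))^2 \<le> (\<Sum>y\<in>{y. E x y}. cmod (f y))^2" by (intro power_mono) auto
  also have "\<dots> \<le> (\<Sum>y\<in>{y. E x y}. (cmod (f y))^2) * card {y. E x y}"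
    by (rule sum_squared_le_sum_of_squares)
  also have "\<dots> \<le> (\<Sum>y\<in>{y. E x y}. (cmod (f y))^2) * real D"
    by (intro mult_left_mono) (auto simp: degN sum_nonneg)
  finally show ?thesis by (simp add: mult.commute)
qed

lemma double_sum_le:
  fixes g :: "'v \<Rightarrow> real"
  assumes "finite F" "\<And>y. 0 \<le> g y"
  shows "(\<Sum>x\<in>F. \<Sum>y\<in>{y. E x y}. g y) \<le> real D * (\<Sum>y\<in>(\<Union>x\<in>F. {y. E x y}). g y)"
proof -
  let ?S = "\<Union>x\<in>F. {y. E x y}"
  have fS: "finite ?S" using assms finN by auto
  have "(\<Sum>x\<in>F. \<Sum>y\<in>{y. E x y}. g y) = (\<Sum>x\<in>F. \<Sum>y\<in>?S. if E x y then g y else 0)"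
  proof (rule sum.cong[OF refl])
    fix x assume "x \<in> F"
    then have "{y\<in>?S. E x y} = {y. E x y}" by auto
    then show "(\<Sum>y\<in>{y. E x y}. g y) = (\<Sum>y\<in>?S. if E x y then g y else 0)"
      using sum.inter_filter[OF fS, of g "E x"] by simp
  qed
  also have "\<dots> = (\<Sum>y\<in>?S. \<Sum>x\<in>F. if E x y then g y else 0)" by (rule sum.swap)
  also have "\<dots> = (\<Sum>y\<in>?S. real (card {x\<in>F. E x y}) * g y)"
  proof (rule sum.cong[OF refl])
    fix y
    show "(\<Sum>x\<in>F. if E x y then g y else 0) = real (card {x\<in>F. E x y}) * g y"
      using sum.inter_filter[OF assms(1), of "\<lambda>_. g y" "\<lambda>x. E x y"] by simp
  qed
  also have "\<dots> \<le> (\<Sum>y\<in>?S. real D * g y)"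
  proof (rule sum_mono)
    fix y assume "y \<in> ?S"
    have "{x\<in>F. E x y} \<subseteq> {x. E y x}" using sym by auto
    then have "card {x\<in>F. E x y} \<le> card {x. E y x}" using finN by (intro card_mono) auto
    also have "\<dots> \<le> D" by (rule degN)
    finally show "real (card {x\<in>F. E x y}) * g y \<le> real D * g y"
      using assms(2) by (intro mult_right_mono) auto
  qed
  finally show ?thesis by (simp add: sum_distrib_left)
qed

lemma adj_fin_bound:
  assumes "sqs f" "finite F"
  shows "(\<Sum>x\<in>F. (cmod (adjop E f x))^2) \<le> (real D * sqrt (\<Sum>\<^sub>\<infinity>x. (cmod (f x))^2))^2"
proof -
  let ?S = "\<Union>x\<in>F. {y. E x y}"
  let ?I = "\<Sum>\<^sub>\<infinity>x. (cmod (f x))^2"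
  have I0: "0 \<le> ?I" by (simp add: infsum_nonneg)
  have "(\<Sum>x\<in>F. (cmod (adjop E f x))^2) \<le> (\<Sum>x\<in>F. real D * (\<Sum>y\<in>{y. E x y}. (cmod (f y))^2))"
    by (intro sum_mono adj_sq_le)
  also have "\<dots> = real D * (\<Sum>x\<in>F. \<Sum>y\<in>{y. E x y}. (cmod (f y))^2)" by (simp add: sum_distrib_left)
  also have "\<dots> \<le> real D * (real D * (\<Sum>y\<in>?S. (cmod (f y))^2))"
    by (intro mult_left_mono double_sum_le assms) auto
  also have "\<dots> \<le> real D * (real D * ?I)"
  proof -
    have "(\<Sum>y\<in>?S. (cmod (f y))^2) \<le> ?I"
      using assms finN by (intro finite_sum_le_infsum) (auto simp: sqs_def)
    then show ?thesis by (intro mult_left_mono) auto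
  qed
  also have "\<dots> = (real D * sqrt ?I)^2" using I0 by (simp add: power_mult_distrib power2_eq_square)
  finally show ?thesis .
qed

lemma sqs_adj: "sqs f \<Longrightarrow> sqs (adjop E f)"
  using sqs_bound(1)[of "adjop E f"] adj_fin_bound by blast

definition Aop :: "'v l2 \<Rightarrow> 'v l2" where "Aop f = Abs_l2 (adjop E (vec f))"

lemma vec_Aop[simp]: "vec (Aop f) = adjop E (vec f)"
  unfolding Aop_def by (simp add: sqs_adj)

lemma norm_Aop: "norm (Aop f) \<le> real D * norm f"
  unfolding Aop_def norm_l2_def[of f]
  by (rule norm_Abs_bound(2)) (auto intro!: adj_fin_bound mult_nonneg_nonneg real_sqrt_ge_zero infsum_nonneg)

lemma Aop_add: "Aop (f + g) = Aop f + Aop g"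
  by (rule l2_eqI) (simp add: adjop_def sum.distrib)

lemma Aop_scaleR: "Aop (r *\<^sub>R f) = r *\<^sub>R Aop f"
  by (rule l2_eqI) (simp add: adjop_def sum_distrib_left)

lemma bl_Aop: "bounded_linear Aop"
  by (rule bounded_linear_intro[where K="real D"]) (auto simp: Aop_add Aop_scaleR norm_Aop mult.commute)

end

definition Mul :: "('v \<Rightarrow> real) \<Rightarrow> 'v l2 \<Rightarrow> 'v l2" where
  "Mul a f = Abs_l2 (\<lambda>x. complex_of_real (a x) * vec f x)"

lemma sqs_mul:
  assumes "\<And>x. \<bar>a x\<bar> \<le> c"
  shows "sqs (\<lambda>x. complex_of_real (a x) * vec f x)"
proof (rule sqs_mono[OF sqs_cmult[OF sqs_vec[of f], of "complex_of_real c"]])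
  fix x
  have "\<bar>a x\<bar> \<le> \<bar>c\<bar>" using assms[of x] by simp
  then show "cmod (complex_of_real (a x) * vec f x) \<le> cmod (complex_of_real c * vec f x)"
    by (simp add: norm_mult mult_right_mono)
qed

lemma vec_Mul:
  assumes "\<And>x. \<bar>a x\<bar> \<le> c"
  shows "vec (Mul a f) = (\<lambda>x. complex_of_real (a x) * vec f x)"
  unfolding Mul_def using sqs_mul[of a c f, OF assms] by simp

lemma norm_Mul:
  assumes "\<And>x. \<bar>a x\<bar> \<le> c"
  shows "norm (Mul a f) \<le> c * norm f"
proof -
  have c0: "0 \<le> c" using assms[of undefined] by simp
  have "norm (Mul a f) \<le> norm (c *\<^sub>R f)"
  proof (rule norm_mono_l2)
    fix x
    show "cmod (vec (Mul a f) x) \<le> cmod (vec (c *\<^sub>R f) x)"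
      using assms[of x] c0 by (simp add: vec_Mul[OF assms] norm_mult mult_right_mono)
  qed
  then show ?thesis using c0 by simp
qed

lemma Mul_add:
  assumes "\<And>x. \<bar>a x\<bar> \<le> c"
  shows "Mul a (f + g) = Mul a f + Mul a g"
  by (rule l2_eqI) (simp add: vec_Mul[OF assms] algebra_simps)

lemma Mul_scaleR:
  assumes "\<And>x. \<bar>a x\<bar> \<le> c"
  shows "Mul a (r *\<^sub>R f) = r *\<^sub>R Mul a f"
  by (rule l2_eqI) (simp add: vec_Mul[OF assms] algebra_simps)

lemma bl_Mul:
  assumes "\<And>x. \<bar>a x\<bar> \<le> c"
  shows "bounded_linear (Mul a)"
  by (rule bounded_linear_intro[where K=c])
    (auto simp: Mul_add[OF assms] Mul_scaleR[OF assms] norm_Mul[OF assms] mult.commute)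

definition Jm :: "'v l2 \<Rightarrow> 'v l2" where "Jm f = Abs_l2 (\<lambda>x. - \<i> * vec f x)"

lemma vec_Jm[simp]: "vec (Jm f) = (\<lambda>x. - \<i> * vec f x)"
  unfolding Jm_def by (rule vec_Abs) (rule sqs_cmult[OF sqs_vec])

lemma norm_Jm[simp]: "norm (Jm f) = norm f"
  unfolding norm_l2_def by (simp add: norm_mult)

lemma bl_Jm: "bounded_linear Jm"
  by (rule bounded_linear_intro[where K=1]) (auto intro!: l2_eqI simp: algebra_simps)

definition absv :: "'v l2 \<Rightarrow> 'v l2" where "absv f = Abs_l2 (\<lambda>x. complex_of_real (cmod (vec f x)))"

lemma vec_absv[simp]: "vec (absv f) = (\<lambda>x. complex_of_real (cmod (vec f x)))"
  unfolding absv_def by (rule vec_Abs) (rule sqs_mono[OF sqs_vec[of f]], simp)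

lemma norm_absv[simp]: "norm (absv f) = norm f"
  unfolding norm_l2_def by simp


lemma vec_sum: "vec (sum h K) x = (\<Sum>k\<in>K. vec (h k) x)"
  by (induction K rule: infinite_finite_induct) auto

context gr begin

definition Kop :: "'v l2 \<Rightarrow> 'v l2" where "Kop f = Jm (Aop f + Mul V f)"

lemma vec_Kop: "vec (Kop f) x = - \<i> * ham E V (vec f) x"
  unfolding Kop_def ham_def by (simp add: vec_Mul[OF VB])

lemma norm_Kop: "norm (Kop f) \<le> (real D + B) * norm f"
proof -
  have "norm (Kop f) = norm (Aop f + Mul V f)" unfolding Kop_def by simp
  also have "\<dots> \<le> norm (Aop f) + norm (Mul V f)" by (rule norm_triangle_ineq)
  also have "\<dots> \<le> real D * norm f + B * norm f" by (intro add_mono norm_Aop norm_Mul[OF VB])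
  finally show ?thesis by (simp add: algebra_simps)
qed

lemma bl_Kop: "bounded_linear Kop"
proof -
  have "bounded_linear (\<lambda>f. Jm (Aop f + Mul V f))"
    by (intro bounded_linear_compose[OF bl_Jm] bounded_linear_add bl_Aop bl_Mul[OF VB])
  then show ?thesis unfolding Kop_def[abs_def] .
qed

definition Ed :: "('v \<times> 'v) set" where "Ed = Sigma UNIV (\<lambda>x. {y. E x y})"

lemma bij_swap: "bij_betw prod.swap Ed Ed"
  by (rule bij_betwI[where g=prod.swap]) (auto simp: Ed_def sym)

lemma fst_sum_bound:
  fixes h :: "'v \<Rightarrow> real"
  assumes "finite P" "P \<subseteq> Ed" "\<And>x. 0 \<le> h x" "h summable_on UNIV"
  shows "(\<Sum>p\<in>P. h (fst p)) \<le> real D * (\<Sum>\<^sub>\<infinity>x. h x)"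
proof -
  let ?Q = "Sigma (fst ` P) (\<lambda>x. {y. E x y})"
  have fQ: "finite ?Q" using assms(1) finN by (intro finite_SigmaI) auto
  have "P \<subseteq> ?Q" using assms(2) unfolding Ed_def by force
  then have "(\<Sum>p\<in>P. h (fst p)) \<le> (\<Sum>p\<in>?Q. h (fst p))" using fQ assms(3) by (intro sum_mono2) auto
  also have "\<dots> = (\<Sum>(x,y)\<in>?Q. h x)" by (rule sum.cong) auto
  also have "\<dots> = (\<Sum>x\<in>fst ` P. \<Sum>y\<in>{y. E x y}. h x)"
    using assms(1) finN by (subst sum.Sigma) auto
  also have "\<dots> = (\<Sum>x\<in>fst ` P. real (card {y. E x y}) * h x)" by simp
  also have "\<dots> \<le> (\<Sum>x\<in>fst ` P. real D * h x)"
    by (intro sum_mono mult_right_mono) (auto simp: degN assms(3))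
  also have "\<dots> = real D * (\<Sum>x\<in>fst ` P. h x)" by (simp add: sum_distrib_left)
  also have "\<dots> \<le> real D * (\<Sum>\<^sub>\<infinity>x. h x)"
    by (intro mult_left_mono finite_sum_le_infsum) (auto simp: assms)
  finally show ?thesis .
qed

lemma snd_sum_bound:
  fixes h :: "'v \<Rightarrow> real"
  assumes "finite P" "P \<subseteq> Ed" "\<And>x. 0 \<le> h x" "h summable_on UNIV"
  shows "(\<Sum>p\<in>P. h (snd p)) \<le> real D * (\<Sum>\<^sub>\<infinity>x. h x)"
proof -
  have "(\<Sum>p\<in>P. h (snd p)) = (\<Sum>p\<in>prod.swap ` P. h (fst p))"
    by (subst sum.reindex) (auto intro: inj_on_subset[OF swap_inj_on])
  also have "\<dots> \<le> real D * (\<Sum>\<^sub>\<infinity>x. h x)"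
  proof (rule fst_sum_bound)
    show "prod.swap ` P \<subseteq> Ed" using assms(2) bij_swap unfolding bij_betw_def by auto
  qed (use assms in auto)
  finally show ?thesis .
qed

lemma skew_Kop: "inner u (Kop u) = 0"
proof -
  define a where "a = vec u"
  define c where "c p = cnj (a (fst p)) * a (snd p)" for p
  have h0: "\<And>x. 0 \<le> (cmod (a x))^2" by simp
  have hs: "(\<lambda>x. (cmod (a x))^2) summable_on UNIV" unfolding a_def by (rule sqs_vec')
  have csum: "c summable_on Ed"
  proof (rule abs_summable_summable)
    show "(\<lambda>p. norm (c p)) summable_on Ed" unfolding abs_summable_iff_bdd_above
    proof (rule bdd_aboveI)
      fix s assume "s \<in> sum (\<lambda>p. norm (c p)) ` {F. F \<subseteq> Ed \<and> finite F}"
      then obtain P where P: "P \<subseteq> Ed" "finite P" "s = (\<Sum>p\<in>P. norm (c p))" by auto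
      have "s \<le> (\<Sum>p\<in>P. (cmod (a (fst p)))^2 + (cmod (a (snd p)))^2)"
        unfolding P(3) c_def by (intro sum_mono prod_le_sq2)
      also have "\<dots> = (\<Sum>p\<in>P. (cmod (a (fst p)))^2) + (\<Sum>p\<in>P. (cmod (a (snd p)))^2)"
        by (rule sum.distrib)
      also have "\<dots> \<le> real D * (\<Sum>\<^sub>\<infinity>x. (cmod (a x))^2) + real D * (\<Sum>\<^sub>\<infinity>x. (cmod (a x))^2)"
        by (intro add_mono fst_sum_bound snd_sum_bound P hs h0)
      finally show "s \<le> 2 * real D * (\<Sum>\<^sub>\<infinity>x. (cmod (a x))^2)" by simp
    qed
  qed
  have eq1: "(\<lambda>x. Re (cnj (vec u x) * vec (Kop u) x)) = (\<lambda>x. Im (cnj (a x) * adjop E a x))"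
  proof
    fix x
    show "Re (cnj (vec u x) * vec (Kop u) x) = Im (cnj (a x) * adjop E a x)"
      unfolding vec_Kop ham_def a_def by (simp add: algebra_simps)
  qed
  have sa: "sqs a" unfolding a_def by simp
  have "inner u (Kop u) = (\<Sum>\<^sub>\<infinity>x. Im (cnj (a x) * adjop E a x))"
    unfolding inner_l2_def eq1 ..
  also have "\<dots> = Im (\<Sum>\<^sub>\<infinity>x. cnj (a x) * adjop E a x)"
    by (rule infsum_Im) (rule sqs_inner[OF sa sqs_adj[OF sa]])
  also have "(\<Sum>\<^sub>\<infinity>x. cnj (a x) * adjop E a x) = (\<Sum>\<^sub>\<infinity>x. \<Sum>\<^sub>\<infinity>y\<in>{y. E x y}. c (x,y))"
    by (rule infsum_cong) (simp add: c_def adjop_def sum_distrib_left finN)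
  also have "\<dots> = (\<Sum>\<^sub>\<infinity>p\<in>Ed. c p)" unfolding Ed_def
    by (rule infsum_Sigma_banach) (use csum in \<open>simp add: Ed_def\<close>)
  finally have i1: "inner u (Kop u) = Im (\<Sum>\<^sub>\<infinity>p\<in>Ed. c p)" .
  have "(\<Sum>\<^sub>\<infinity>p\<in>Ed. c p) = (\<Sum>\<^sub>\<infinity>p\<in>Ed. c (prod.swap p))"
    by (rule infsum_reindex_bij_betw[symmetric]) (rule bij_swap)
  also have "\<dots> = (\<Sum>\<^sub>\<infinity>p\<in>Ed. cnj (c p))" by (rule infsum_cong) (simp add: c_def)
  also have "\<dots> = cnj (\<Sum>\<^sub>\<infinity>p\<in>Ed. c p)" by simp
  finally have "Im (\<Sum>\<^sub>\<infinity>p\<in>Ed. c p) = Im (cnj (\<Sum>\<^sub>\<infinity>p\<in>Ed. c p))" by simp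
  then have "Im (\<Sum>\<^sub>\<infinity>p\<in>Ed. c p) = 0" by simp
  with i1 show ?thesis by simp
qed

end


locale grw = gr E V D B for E :: "'v \<Rightarrow> 'v \<Rightarrow> bool" and V D B +
  fixes w :: "'v \<Rightarrow> real" and W :: real
  assumes w0: "\<And>x. 0 \<le> w x" and wW: "\<And>x. w x \<le> W"
    and wlip: "\<And>x y. E x y \<Longrightarrow> \<bar>w x - w y\<bar> \<le> 1"
begin

definition Mw :: "nat \<Rightarrow> 'v l2 \<Rightarrow> 'v l2" where "Mw k = Mul (\<lambda>x. w x ^ k)"

lemma wk: "\<bar>w x ^ k\<bar> \<le> W ^ k"
  using w0[of x] wW[of x] by (simp add: power_mono)

lemma vec_Mw: "vec (Mw k f) x = complex_of_real (w x ^ k) * vec f x"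
  unfolding Mw_def by (simp add: vec_Mul[of "\<lambda>x. w x ^ k" "W^k", OF wk])

lemma bl_Mw: "bounded_linear (Mw k)"
  unfolding Mw_def by (rule bl_Mul[of _ "W^k"]) (rule wk)

lemma Mw0[simp]: "Mw 0 f = f"
  by (rule l2_eqI) (simp add: vec_Mw)

lemma comm_vec: "vec (Mw m (Kop f) - Kop (Mw m f)) x =
    - \<i> * (\<Sum>y\<in>{y. E x y}. complex_of_real (w x ^ m - w y ^ m) * vec f y)"
proof -
  have "vec (Mw m (Kop f) - Kop (Mw m f)) x =
     complex_of_real (w x ^ m) * (- \<i> * ((\<Sum>y\<in>{y. E x y}. vec f y) + complex_of_real (V x) * vec f x))
     - (- \<i> * ((\<Sum>y\<in>{y. E x y}. complex_of_real (w y ^ m) * vec f y) + complex_of_real (V x) * (complex_of_real (w x ^ m) * vec f x)))"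
    by (simp add: vec_Mw vec_Kop ham_def adjop_def)
  also have "\<dots> = - \<i> * (complex_of_real (w x ^ m) * (\<Sum>y\<in>{y. E x y}. vec f y) - (\<Sum>y\<in>{y. E x y}. complex_of_real (w y ^ m) * vec f y))"
    by (simp add: algebra_simps)
  also have "complex_of_real (w x ^ m) * (\<Sum>y\<in>{y. E x y}. vec f y) - (\<Sum>y\<in>{y. E x y}. complex_of_real (w y ^ m) * vec f y)
      = (\<Sum>y\<in>{y. E x y}. complex_of_real (w x ^ m - w y ^ m) * vec f y)"
    by (simp add: sum_distrib_left sum_subtractf[symmetric] algebra_simps)
  finally show ?thesis .
qed

lemma comm_bound:
  "norm (Mw m (Kop f) - Kop (Mw m f)) \<le> real D * (\<Sum>k<m. real (m choose k) * norm (Mw k f))"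
proof -
  define G where "G = (\<Sum>k<m. real (m choose k) *\<^sub>R Aop (absv (Mw k f)))"
  define g where "g x = (\<Sum>y\<in>{y. E x y}. \<Sum>k<m. real (m choose k) * (w y ^ k * cmod (vec f y)))" for x
  have vG: "vec G x = complex_of_real (g x)" for x
  proof -
    have "vec G x = (\<Sum>k<m. complex_of_real (real (m choose k)) *
        (\<Sum>y\<in>{y. E x y}. complex_of_real (w y ^ k * cmod (vec f y))))"
      by (simp add: G_def vec_sum adjop_def vec_Mw scaleR_conv_of_real norm_mult norm_power abs_of_nonneg w0)
    also have "\<dots> = complex_of_real (\<Sum>k<m. \<Sum>y\<in>{y. E x y}. real (m choose k) * (w y ^ k * cmod (vec f y)))"
      by (simp add: sum_distrib_left)
    also have "\<dots> = complex_of_real (g x)" unfolding g_def by (subst sum.swap) simp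
    finally show ?thesis .
  qed
  have g0: "0 \<le> g x" for x unfolding g_def by (intro sum_nonneg mult_nonneg_nonneg) (auto simp: w0)
  have "norm (Mw m (Kop f) - Kop (Mw m f)) \<le> norm G"
  proof (rule norm_mono_l2)
    fix x
    have "cmod (vec (Mw m (Kop f) - Kop (Mw m f)) x)
        = cmod (\<Sum>y\<in>{y. E x y}. complex_of_real (w x ^ m - w y ^ m) * vec f y)"
      unfolding comm_vec by (simp only: norm_mult norm_minus_cancel norm_ii mult_1)
    also have "\<dots> \<le> (\<Sum>y\<in>{y. E x y}. cmod (complex_of_real (w x ^ m - w y ^ m) * vec f y))"
      by (rule norm_sum)
    also have "\<dots> \<le> (\<Sum>y\<in>{y. E x y}. (\<Sum>k<m. real (m choose k) * w y ^ k) * cmod (vec f y))"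
    proof (rule sum_mono)
      fix y assume "y \<in> {y. E x y}"
      then have "\<bar>w x ^ m - w y ^ m\<bar> \<le> (\<Sum>k<m. real (m choose k) * w y ^ k)"
        by (intro pow_diff_le w0 wlip) auto
      moreover have "cmod (complex_of_real (w x ^ m - w y ^ m)) = \<bar>w x ^ m - w y ^ m\<bar>"
        by (rule norm_of_real)
      ultimately show "cmod (complex_of_real (w x ^ m - w y ^ m) * vec f y) \<le> (\<Sum>k<m. real (m choose k) * w y ^ k) * cmod (vec f y)"
        by (simp only: norm_mult) (rule mult_right_mono, simp_all)
    qed
    also have "\<dots> = g x" unfolding g_def
      by (rule sum.cong[OF refl]) (simp add: sum_distrib_right mult.assoc)
    also have "\<dots> = cmod (vec G x)" using g0[of x] by (simp add: vG)
    finally show "cmod (vec (Mw m (Kop f) - Kop (Mw m f)) x) \<le> cmod (vec G x)" .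
  qed
  also have "norm G \<le> (\<Sum>k<m. norm (real (m choose k) *\<^sub>R Aop (absv (Mw k f))))"
    unfolding G_def by (rule norm_sum)
  also have "\<dots> \<le> (\<Sum>k<m. real (m choose k) * (real D * norm (Mw k f)))"
  proof (rule sum_mono)
    fix k
    have "norm (Aop (absv (Mw k f))) \<le> real D * norm (Mw k f)"
      using norm_Aop[of "absv (Mw k f)"] by simp
    then show "norm (real (m choose k) *\<^sub>R Aop (absv (Mw k f))) \<le> real (m choose k) * (real D * norm (Mw k f))"
      by (simp add: mult_left_mono)
  qed
  also have "\<dots> = real D * (\<Sum>k<m. real (m choose k) * norm (Mw k f))"
    by (simp add: sum_distrib_left algebra_simps)
  finally show ?thesis .
qed

end


lemma fact_cancel: "real (Suc k) * t ^ k / fact (Suc k) = t ^ k / (fact k :: real)"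
proof -
  have "real (Suc k) * t ^ k / fact (Suc k) = (real (Suc k) * t ^ k) / (real (Suc k) * fact k)"
    by (simp only: fact_Suc)
  also have "\<dots> = t^k / fact k" by (rule nonzero_mult_divide_mult_cancel_left) simp
  finally show ?thesis .
qed

lemma pw_neg_i: "(- (\<i> * c))^n = c^n * (- \<i>)^n"
  by (simp only: minus_mult_left power_mult_distrib mult.commute)

lemma exp_summable: "summable (\<lambda>n. c * ((x::real)^n / fact n))"
proof -
  have "summable (\<lambda>n. c * (inverse (fact n) * x^n))"
    by (rule summable_mult) (rule summable_exp)
  then show ?thesis by (simp add: divide_inverse mult.commute mult.left_commute)
qed

context gr begin

lemma Kop_scaleR: "Kop (r *\<^sub>R f) = r *\<^sub>R Kop f"
  by (rule l2_eqI) (simp add: vec_Kop ham_def adjop_def sum_distrib_left algebra_simps scaleR_conv_of_real)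

definition cK :: real where "cK = real D + B"

lemma cK0: "0 \<le> cK" unfolding cK_def using B_nonneg by simp

definition vn :: "'v l2 \<Rightarrow> nat \<Rightarrow> 'v l2" where "vn \<psi> n = (Kop ^^ n) \<psi>"

lemma vn_Suc: "vn \<psi> (Suc n) = Kop (vn \<psi> n)" by (simp add: vn_def)
lemma vn_0: "vn \<psi> 0 = \<psi>" by (simp add: vn_def)

lemma norm_vn: "norm (vn \<psi> n) \<le> cK ^ n * norm \<psi>"
proof (induction n)
  case 0 then show ?case by (simp add: vn_0)
next
  case (Suc n)
  have "norm (vn \<psi> (Suc n)) \<le> cK * norm (vn \<psi> n)" unfolding vn_Suc cK_def by (rule norm_Kop)
  also have "\<dots> \<le> cK * (cK^n * norm \<psi>)" using Suc cK0 by (intro mult_left_mono)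
  finally show ?case by (simp add: algebra_simps)
qed

definition Ut :: "real \<Rightarrow> 'v l2 \<Rightarrow> 'v l2" where "Ut t \<psi> = (\<Sum>n. (t^n / fact n) *\<^sub>R vn \<psi> n)"

lemma term_bound: "norm ((t^n / fact n) *\<^sub>R vn \<psi> n) \<le> norm \<psi> * ((\<bar>t\<bar> * cK)^n / fact n)"
proof -
  have "norm ((t^n / fact n) *\<^sub>R vn \<psi> n) = (\<bar>t\<bar>^n / fact n) * norm (vn \<psi> n)" by (simp add: power_abs)
  also have "\<dots> \<le> (\<bar>t\<bar>^n / fact n) * (cK^n * norm \<psi>)" by (intro mult_left_mono norm_vn) auto
  also have "\<dots> = norm \<psi> * ((\<bar>t\<bar> * cK)^n / fact n)" by (simp add: power_mult_distrib)
  finally show ?thesis .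
qed

lemma summable_U: "summable (\<lambda>n. (t^n / fact n) *\<^sub>R vn \<psi> n)"
  using summable_comparison_test[OF _ exp_summable[of "norm \<psi>" "\<bar>t\<bar> * cK"], of "\<lambda>n. (t^n / fact n) *\<^sub>R vn \<psi> n"]
    term_bound by blast

lemma U_deriv: "((\<lambda>t. Ut t \<psi>) has_vector_derivative Kop (Ut t0 \<psi>)) (at t0)"
proof -
  define S where "S = {t0 - 1 <..< t0 + 1}"
  define R where "R = \<bar>t0\<bar> + 1"
  define f where "f n t = (t^n / fact n) *\<^sub>R vn \<psi> n" for n t
  define b where "b n t = (real n * t^(n-1) / fact n) *\<^sub>R vn \<psi> n" for n t
  have tS: "\<bar>t\<bar> \<le> R" if "t \<in> S" for t using that unfolding S_def R_def by auto
  have fd: "(f n has_derivative (\<lambda>h. h *\<^sub>R b n t)) (at t within S)" for n t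
  proof -
    have "((\<lambda>t. t^n / fact n) has_real_derivative (real n * t^(n-1) / fact n)) (at t within S)"
      by (auto intro!: derivative_eq_intros)
    from has_vector_derivative_scaleR[OF this has_vector_derivative_const[of "vn \<psi> n"]]
    show ?thesis unfolding f_def b_def has_vector_derivative_def by simp
  qed
  define M where "M n = (if n = 0 then 0 else norm \<psi> * cK * ((R * cK)^(n-1) / fact (n-1)))" for n
  have bM: "norm (b n t) \<le> M n" if "t \<in> S" for n t
  proof (cases n)
    case 0 then show ?thesis by (simp add: b_def M_def)
  next
    case (Suc k)
    have "b n t = (t^k / fact k) *\<^sub>R vn \<psi> (Suc k)" unfolding b_def Suc diff_Suc_1 fact_cancel ..
    then have "norm (b n t) = (\<bar>t\<bar>^k / fact k) * norm (vn \<psi> (Suc k))" by (simp add: power_abs)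
    also have "\<dots> \<le> (\<bar>t\<bar>^k / fact k) * (cK^(Suc k) * norm \<psi>)" by (intro mult_left_mono norm_vn) auto
    also have "\<dots> \<le> (R^k / fact k) * (cK^(Suc k) * norm \<psi>)"
      using tS[OF that] cK0 by (intro mult_right_mono divide_right_mono power_mono) auto
    also have "\<dots> = M n" by (simp add: M_def Suc power_mult_distrib)
    finally show ?thesis .
  qed
  have sM: "summable M"
  proof -
    have "summable (\<lambda>n. norm \<psi> * cK * ((R * cK)^n / fact n))" by (rule exp_summable)
    then have "summable (\<lambda>n. M (Suc n))" by (simp add: M_def)
    then show ?thesis by (simp only: summable_Suc_iff)
  qed
  have ul: "uniform_limit S (\<lambda>n t. \<Sum>i<n. b i t) (\<lambda>t. \<Sum>i. b i t) sequentially"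
    by (rule Weierstrass_m_test[OF bM sM])
  have bsum: "(\<Sum>i. b i t) = Kop (Ut t \<psi>)" for t
  proof -
    have bS: "(\<lambda>i. b (Suc i) t) = (\<lambda>i. Kop (f i t))"
    proof
      fix i
      show "b (Suc i) t = Kop (f i t)"
        unfolding b_def f_def vn_Suc Kop_scaleR diff_Suc_1 fact_cancel ..
    qed
    have s1: "summable (\<lambda>i. Kop (f i t))"
      unfolding f_def by (rule bounded_linear.summable[OF bl_Kop summable_U])
    then have "summable (\<lambda>i. b (Suc i) t)" by (simp only: bS)
    then have s2: "summable (\<lambda>i. b i t)" using summable_Suc_iff[of "\<lambda>i. b i t"] by simp
    have "(\<Sum>i. b i t) = (\<Sum>i. b (Suc i) t) + b 0 t" using suminf_split_head[OF s2] by simp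
    also have "\<dots> = (\<Sum>i. Kop (f i t))" by (simp only: bS) (simp add: b_def)
    also have "\<dots> = Kop (\<Sum>i. f i t)"
      unfolding f_def by (rule bounded_linear.suminf[OF bl_Kop summable_U, symmetric])
    finally show ?thesis unfolding f_def Ut_def .
  qed
  have "\<exists>g. \<forall>x\<in>S. (\<lambda>n. f n x) sums g x \<and> (g has_derivative (\<lambda>h. h *\<^sub>R Kop (Ut x \<psi>))) (at x within S)"
  proof (rule has_derivative_series[where g'="\<lambda>x h. h *\<^sub>R Kop (Ut x \<psi>)"])
    show "convex S" unfolding S_def by simp
    show "\<And>n x. x \<in> S \<Longrightarrow> (f n has_derivative (\<lambda>h. h *\<^sub>R b n x)) (at x within S)" by (rule fd)
    show "t0 \<in> S" unfolding S_def by auto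
    show "(\<lambda>n. f n t0) sums Ut t0 \<psi>" unfolding f_def Ut_def using summable_U by (rule summable_sums)
    show "\<forall>\<^sub>F n in sequentially. \<forall>x\<in>S. \<forall>h. norm ((\<Sum>i<n. h *\<^sub>R b i x) - h *\<^sub>R Kop (Ut x \<psi>)) \<le> e * norm h"
      if "e > 0" for e
    proof -
      from uniform_limitD[OF ul that]
      have "\<forall>\<^sub>F n in sequentially. \<forall>x\<in>S. dist (\<Sum>i<n. b i x) (\<Sum>i. b i x) < e" .
      then show ?thesis
      proof (rule eventually_mono)
        fix n assume H: "\<forall>x\<in>S. dist (\<Sum>i<n. b i x) (\<Sum>i. b i x) < e"
        show "\<forall>x\<in>S. \<forall>h. norm ((\<Sum>i<n. h *\<^sub>R b i x) - h *\<^sub>R Kop (Ut x \<psi>)) \<le> e * norm h"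
        proof (intro ballI allI)
          fix x h assume "x \<in> S"
          have "(\<Sum>i<n. h *\<^sub>R b i x) - h *\<^sub>R Kop (Ut x \<psi>) = h *\<^sub>R ((\<Sum>i<n. b i x) - (\<Sum>i. b i x))"
            by (simp add: bsum scaleR_sum_right scaleR_diff_right)
          then have "norm ((\<Sum>i<n. h *\<^sub>R b i x) - h *\<^sub>R Kop (Ut x \<psi>)) = \<bar>h\<bar> * norm ((\<Sum>i<n. b i x) - (\<Sum>i. b i x))"
            by simp
          also have "\<dots> \<le> \<bar>h\<bar> * e" using H \<open>x\<in>S\<close> by (intro mult_left_mono) (auto simp: dist_norm less_imp_le)
          finally show "norm ((\<Sum>i<n. h *\<^sub>R b i x) - h *\<^sub>R Kop (Ut x \<psi>)) \<le> e * norm h" by (simp add: mult.commute)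
        qed
      qed
    qed
  qed
  then obtain g where g: "\<forall>x\<in>S. (\<lambda>n. f n x) sums g x \<and> (g has_derivative (\<lambda>h. h *\<^sub>R Kop (Ut x \<psi>))) (at x within S)"
    by blast
  have gU: "g x = Ut x \<psi>" if "x \<in> S" for x
    using g that unfolding f_def Ut_def by (metis sums_unique)
  have oS: "open S" "t0 \<in> S" unfolding S_def by auto
  have "(g has_derivative (\<lambda>h. h *\<^sub>R Kop (Ut t0 \<psi>))) (at t0)"
    using g oS at_within_open[OF oS(2) oS(1)] by metis
  then have "((\<lambda>t. Ut t \<psi>) has_derivative (\<lambda>h. h *\<^sub>R Kop (Ut t0 \<psi>))) (at t0)"
    by (rule has_derivative_transform_within_open[OF _ oS]) (simp add: gU)
  then show ?thesis unfolding has_vector_derivative_def .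
qed

lemma ham_cmult: "ham E V (\<lambda>x. c * g x) x = c * ham E V g x"
  by (simp add: ham_def adjop_def sum_distrib_left algebra_simps)

lemma vec_vn: "vec (vn \<psi> n) x = (- \<i>)^n * (ham E V ^^ n) (vec \<psi>) x"
proof (induction n arbitrary: x)
  case 0 then show ?case by (simp add: vn_0)
next
  case (Suc n)
  have "vec (vn \<psi> (Suc n)) x = - \<i> * ham E V (vec (vn \<psi> n)) x" by (simp add: vn_Suc vec_Kop)
  also have "vec (vn \<psi> n) = (\<lambda>x. (- \<i>)^n * (ham E V ^^ n) (vec \<psi>) x)" using Suc by auto
  also have "ham E V (\<lambda>x. (- \<i>)^n * (ham E V ^^ n) (vec \<psi>) x) x = (- \<i>)^n * ham E V ((ham E V ^^ n) (vec \<psi>)) x"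
    by (rule ham_cmult)
  finally show ?case by simp
qed

lemma vec_Ut: "vec (Ut t \<psi>) x = evol E V t (vec \<psi>) x"
proof -
  have "vec (Ut t \<psi>) x = (\<Sum>n. vec ((t^n / fact n) *\<^sub>R vn \<psi> n) x)"
    unfolding Ut_def by (rule bounded_linear.suminf[OF bounded_linear_vec summable_U])
  also have "\<dots> = (\<Sum>n. ((- \<i> * complex_of_real t)^n / of_nat (fact n)) * (ham E V ^^ n) (vec \<psi>) x)"
    by (rule suminf_cong) (simp add: vec_vn pw_neg_i scaleR_conv_of_real)
  finally show ?thesis unfolding evol_def .
qed

end


lemma sqrt_add_le: "0 \<le> a \<Longrightarrow> 0 \<le> e \<Longrightarrow> sqrt (a^2 + e) \<le> a + sqrt e"
proof -
  assume a: "0 \<le> a" and e: "0 \<le> e"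
  have "a^2 + e \<le> (a + sqrt e)^2" using a e by (simp add: power2_sum)
  then have "sqrt (a^2 + e) \<le> sqrt ((a + sqrt e)^2)" by (rule real_sqrt_le_mono)
  also have "\<dots> = a + sqrt e" using a e by simp
  finally show ?thesis .
qed

lemma gronwall_sq:
  fixes h q P Pd g' :: "real \<Rightarrow> real"
  assumes dg: "\<And>t. ((\<lambda>s. (h s)^2) has_real_derivative g' t) (at t)"
    and g'le: "\<And>t. 0 \<le> t \<Longrightarrow> g' t \<le> 2 * h t * q t"
    and h0: "\<And>t. 0 \<le> h t" and q0: "\<And>t. 0 \<le> t \<Longrightarrow> 0 \<le> q t"
    and qP: "\<And>t. 0 \<le> t \<Longrightarrow> q t \<le> Pd t"
    and dP: "\<And>t. (P has_real_derivative Pd t) (at t)" and init: "h 0 \<le> P 0" and t0: "0 \<le> t"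
  shows "h t \<le> P t"
proof (rule ccontr)
  assume nt: "\<not> h t \<le> P t"
  define e where "e = ((h t - P t)/2)^2"
  have e0: "0 < e" using nt by (simp add: e_def)
  have se: "sqrt e = (h t - P t)/2" using nt by (simp add: e_def)
  define F where "F s = sqrt ((h s)^2 + e) - P s" for s
  have pos: "0 < (h s)^2 + e" for s using e0 by (simp add: add_nonneg_pos)
  have dF: "(F has_real_derivative (g' s * (inverse (sqrt ((h s)^2 + e)) / 2) - Pd s)) (at s)" for s
  proof -
    have "((\<lambda>s. (h s)^2 + e) has_real_derivative g' s) (at s)"
      using DERIV_add[OF dg[of s] DERIV_const[of e]] by simp
    from DERIV_chain2[OF DERIV_real_sqrt[OF pos[of s]] this]
    have "((\<lambda>s. sqrt ((h s)^2 + e)) has_real_derivative inverse (sqrt ((h s)^2 + e)) / 2 * g' s) (at s)" .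
    from DERIV_diff[OF this dP[of s]] show ?thesis unfolding F_def by (simp add: mult.commute)
  qed
  have dFle: "g' s * (inverse (sqrt ((h s)^2 + e)) / 2) - Pd s \<le> 0" if s0: "0 \<le> s" for s
  proof -
    define r where "r = sqrt ((h s)^2 + e)"
    have r0: "0 < r" unfolding r_def using pos[of s] by simp
    have hr: "h s \<le> r" unfolding r_def using h0[of s] e0
      by (intro real_le_rsqrt) (use e0 in simp)
    have "g' s * (inverse r / 2) \<le> (2 * h s * q s) * (inverse r / 2)"
      using g'le[OF s0] r0 by (intro mult_right_mono) auto
    also have "\<dots> = (h s * q s) / r" by (simp add: field_simps)
    also have "\<dots> \<le> (r * q s) / r" using hr q0[OF s0] r0
      by (intro divide_right_mono mult_right_mono) auto
    also have "\<dots> = q s" using r0 by simp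
    also have "\<dots> \<le> Pd s" by (rule qP[OF s0])
    finally show ?thesis unfolding r_def by simp
  qed
  have "F t \<le> F 0"
    by (rule DERIV_nonpos_imp_nonincreasing[OF t0]) (use dF dFle in blast)
  also have "F 0 \<le> sqrt e"
  proof -
    have "sqrt ((h 0)^2 + e) \<le> h 0 + sqrt e" using h0[of 0] e0 by (intro sqrt_add_le) auto
    then show ?thesis unfolding F_def using init by simp
  qed
  finally have "sqrt ((h t)^2 + e) \<le> P t + sqrt e" unfolding F_def by simp
  moreover have "h t \<le> sqrt ((h t)^2 + e)"
    by (intro real_le_rsqrt) (use e0 in simp)
  ultimately have "h t \<le> P t + (h t - P t)/2" using se by simp
  then have "h t \<le> P t" by (simp add: field_simps)
  with nt show False by simp
qed

fun Kc :: "nat \<Rightarrow> real" where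
  "Kc 0 = 0"
| "Kc (Suc n) = 2^(n+2) * (1 + Kc n)"

lemma Kc_nonneg: "0 \<le> Kc n"
  by (induction n) auto

lemma Kc_mono_Suc: "Kc n \<le> Kc (Suc n)"
proof -
  have "Kc n \<le> 1 * (1 + Kc n)" by simp
  also have "\<dots> \<le> 2^(n+2) * (1 + Kc n)"
  proof (rule mult_right_mono)
    show "1 \<le> (2::real)^(n+2)" by (rule one_le_power) simp
  qed (use Kc_nonneg[of n] in simp)
  finally show ?thesis by simp
qed

lemma Kc_mono: "i \<le> j \<Longrightarrow> Kc i \<le> Kc j"
  using Kc_mono_Suc by (rule lift_Suc_mono_le)

definition Gf :: "real \<Rightarrow> nat \<Rightarrow> real \<Rightarrow> real" where
  "Gf d n t = (if n = 0 then 1 else (d*t)^n + Kc n * (1 + d*t)^(n-1))"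

definition Gd :: "real \<Rightarrow> nat \<Rightarrow> real \<Rightarrow> real" where
  "Gd d n t = (if n = 0 then 0 else real n * d * (d*t)^(n-1) + Kc n * real (n-1) * d * (1 + d*t)^(n-2))"

lemma Gd0[simp]: "Gd d 0 t = 0" by (simp add: Gd_def)

lemma Gf0[simp]: "Gf d 0 t = 1" by (simp add: Gf_def)

lemma Gf_deriv: "(Gf d n has_real_derivative Gd d n t) (at t)"
proof (cases n)
  case 0
  then show ?thesis unfolding Gf_def[abs_def] Gd_def by simp
next
  case (Suc k)
  have d1: "((\<lambda>t. (d*t)^(Suc k)) has_real_derivative real (Suc k) * (d*t)^k * d) (at t)"
    apply (auto intro!: derivative_eq_intros)
    apply (cases k)
     apply (simp_all add: algebra_simps)
    done
  have d2: "((\<lambda>t. (1 + d*t)^k) has_real_derivative real k * (1 + d*t)^(k-1) * d) (at t)"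
    by (auto intro!: derivative_eq_intros)
  have "((\<lambda>t. (d*t)^(Suc k) + Kc (Suc k) * (1 + d*t)^k) has_real_derivative
      real (Suc k) * (d*t)^k * d + Kc (Suc k) * (real k * (1 + d*t)^(k-1) * d)) (at t)"
    by (rule DERIV_add[OF d1 DERIV_cmult[OF d2]])
  then show ?thesis unfolding Gf_def[abs_def] Gd_def Suc by (simp add: mult_ac)
qed

lemma Gf_nonneg: "0 \<le> d \<Longrightarrow> 0 \<le> t \<Longrightarrow> 0 \<le> Gf d n t"
  unfolding Gf_def using Kc_nonneg by auto

lemma Gf_le: "0 \<le> d \<Longrightarrow> 0 \<le> t \<Longrightarrow> Gf d j t \<le> (1 + Kc j) * (1 + d*t)^j"
proof -
  assume d: "0 \<le> d" and t: "0 \<le> t"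
  let ?u = "d*t"
  have u: "0 \<le> ?u" using d t by simp
  show ?thesis
  proof (cases j)
    case 0 then show ?thesis by (simp add: Gf_def)
  next
    case (Suc k)
    have "(?u)^(Suc k) \<le> (1 + ?u)^(Suc k)" using u by (intro power_mono) auto
    moreover have "(1 + ?u)^k \<le> (1 + ?u)^(Suc k)" using u by (intro power_increasing) auto
    then have "Kc (Suc k) * (1 + ?u)^k \<le> Kc (Suc k) * (1 + ?u)^(Suc k)"
      using Kc_nonneg by (intro mult_left_mono) auto
    ultimately show ?thesis unfolding Gf_def Suc by (simp add: algebra_simps)
  qed
qed

lemma super:
  assumes d: "0 \<le> d" and t: "0 \<le> t" and n: "1 \<le> n"
  shows "d * (\<Sum>j<n. real (n choose j) * Gf d j t) \<le> Gd d n t"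
proof (cases "n = 1")
  case True
  then show ?thesis by (simp add: Gf_def Gd_def)
next
  case False
  with n have "2 \<le> n" by simp
  then obtain k where nk: "n = Suc (Suc k)" by (metis add_2_eq_Suc le_Suc_ex)
  define u where "u = d * t"
  have u: "0 \<le> u" unfolding u_def using d t by simp
  define K where "K = Kc (Suc k)"
  have K0: "0 \<le> K" unfolding K_def by (rule Kc_nonneg)
  have sumsplit: "(\<Sum>j<n. real (n choose j) * Gf d j t) =
      (\<Sum>j<Suc k. real (n choose j) * Gf d j t) + real n * Gf d (Suc k) t"
    unfolding nk by simp
  have small: "(\<Sum>j<Suc k. real (n choose j) * Gf d j t) \<le> 2^n * (1 + K) * (1 + u)^k"
  proof -
    have "(\<Sum>j<Suc k. real (n choose j) * Gf d j t) \<le> (\<Sum>j<Suc k. real (n choose j) * ((1 + K) * (1 + u)^k))"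
    proof (rule sum_mono)
      fix j assume "j \<in> {..<Suc k}"
      then have jk: "j \<le> k" by simp
      have "Gf d j t \<le> (1 + Kc j) * (1 + u)^j" unfolding u_def by (rule Gf_le[OF d t])
      also have "\<dots> \<le> (1 + K) * (1 + u)^k"
      proof (rule mult_mono)
        have "Kc j \<le> K" unfolding K_def by (rule Kc_mono) (use jk in simp)
        then show "1 + Kc j \<le> 1 + K" by simp
        show "(1 + u)^j \<le> (1 + u)^k" using jk u by (intro power_increasing) auto
      qed (use K0 u in auto)
      finally show "real (n choose j) * Gf d j t \<le> real (n choose j) * ((1 + K) * (1 + u)^k)"
        by (intro mult_left_mono) auto
    qed
    also have "\<dots> = (\<Sum>j<Suc k. real (n choose j)) * ((1 + K) * (1 + u)^k)"
      by (rule sum_distrib_right[symmetric])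
    also have "\<dots> \<le> 2^n * ((1 + K) * (1 + u)^k)"
    proof (intro mult_right_mono)
      have "(\<Sum>j<Suc k. real (n choose j)) \<le> (\<Sum>j\<le>n. real (n choose j))"
        unfolding nk by (intro sum_mono2) auto
      also have "\<dots> = 2^n" using choose_row_sum[of n] by (simp flip: of_nat_sum)
      finally show "(\<Sum>j<Suc k. real (n choose j)) \<le> 2^n" .
    qed (use K0 u in auto)
    finally show ?thesis by (simp add: algebra_simps)
  qed
  have Gk: "Gf d (Suc k) t = u^(Suc k) + K * (1 + u)^k" unfolding Gf_def K_def u_def by simp
  have Gdn: "Gd d n t = real n * d * u^(Suc k) + Kc n * real (Suc k) * d * (1 + u)^k"
    unfolding Gd_def u_def nk by simp
  have Kcn: "Kc n = 2^(k+3) * (1 + K)" unfolding nk K_def by (simp add: power_add)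
  have nle: "real n \<le> 2^n"
  proof -
    have "n \<le> 2^n" using less_exp[of n] by simp
    then have "real n \<le> real (2^n)" by (simp only: of_nat_le_iff)
    then show ?thesis by simp
  qed
  have "d * (\<Sum>j<n. real (n choose j) * Gf d j t) \<le> d * (2^n * (1 + K) * (1 + u)^k + real n * (u^(Suc k) + K * (1 + u)^k))"
    unfolding sumsplit Gk using small d by (intro mult_left_mono) auto
  also have "\<dots> = real n * d * u^(Suc k) + d * (1 + u)^k * (2^n * (1 + K) + real n * K)"
    by (simp add: algebra_simps)
  also have "\<dots> \<le> real n * d * u^(Suc k) + d * (1 + u)^k * (Kc n * real (Suc k))"
  proof -
    have "2^n * (1 + K) + real n * K \<le> 2^n * (1 + K) + 2^n * (1 + K)"
      using nle K0 by (intro add_left_mono mult_mono) auto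
    also have "\<dots> = Kc n" by (simp add: K_def nk power_add)
    also have "\<dots> \<le> Kc n * real (Suc k)" using Kc_nonneg[of n] by (intro mult_le_cancel_left1[THEN iffD2]) auto
    finally show ?thesis using d u by (intro add_left_mono mult_left_mono) auto
  qed
  also have "\<dots> = Gd d n t" unfolding Gdn by (simp add: algebra_simps)
  finally show ?thesis .
qed

lemma tri_sum:
  fixes F :: "nat \<Rightarrow> nat \<Rightarrow> 'a::comm_monoid_add" and m :: nat
  shows "(\<Sum>k<m. \<Sum>r\<le>k. F k r) = (\<Sum>r<m. \<Sum>j<m-r. F (r+j) r)"
proof -
  have "(\<Sum>k<m. \<Sum>r\<le>k. F k r) = (\<Sum>k<m. \<Sum>i\<le>k. (\<lambda>i j. F (i+j) i) i (k - i))"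
  proof (intro sum.cong refl)
    fix k r :: nat assume "r \<in> {..k}"
    then have "r + (k - r) = k" by simp
    then show "F k r = (\<lambda>i j. F (i+j) i) r (k - r)" by simp
  qed
  also have "\<dots> = (\<Sum>(i,j)\<in>{(i,j). i+j<m}. F (i+j) i)"
    by (rule sum.triangle_reindex[symmetric])
  also have "{(i,j). i+j<m} = Sigma {..<m} (\<lambda>i. {..<m-i})" by auto
  also have "(\<Sum>(i,j)\<in>Sigma {..<m} (\<lambda>i. {..<m-i}). F (i+j) i) = (\<Sum>i<m. \<Sum>j<m-i. F (i+j) i)"
    by (rule sum.Sigma[symmetric]) auto
  finally show ?thesis .
qed

definition Pm :: "real \<Rightarrow> (nat \<Rightarrow> real) \<Rightarrow> nat \<Rightarrow> real \<Rightarrow> real" where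
  "Pm d \<nu> m t = (\<Sum>r\<le>m. real (m choose r) * Gf d (m-r) t * \<nu> r)"

definition Pmd :: "real \<Rightarrow> (nat \<Rightarrow> real) \<Rightarrow> nat \<Rightarrow> real \<Rightarrow> real" where
  "Pmd d \<nu> m t = (\<Sum>r\<le>m. real (m choose r) * Gd d (m-r) t * \<nu> r)"

lemma Pm_deriv: "(Pm d \<nu> m has_real_derivative Pmd d \<nu> m t) (at t)"
  unfolding Pm_def[abs_def] Pmd_def
  by (intro DERIV_sum DERIV_cmult_right DERIV_cmult Gf_deriv)
   
lemma Pm_super:
  assumes d: "0 \<le> d" and t: "0 \<le> t" and nu: "\<And>r. 0 \<le> \<nu> r"
  shows "d * (\<Sum>k<m. real (m choose k) * Pm d \<nu> k t) \<le> Pmd d \<nu> m t"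
proof -
  have "d * (\<Sum>k<m. real (m choose k) * Pm d \<nu> k t)
      = d * (\<Sum>k<m. \<Sum>r\<le>k. real (m choose k) * real (k choose r) * Gf d (k-r) t * \<nu> r)"
    unfolding Pm_def by (simp only: sum_distrib_left mult.assoc)
  also have "\<dots> = d * (\<Sum>r<m. \<Sum>j<m-r. real (m choose (r+j)) * real ((r+j) choose r) * Gf d (r+j-r) t * \<nu> r)"
    by (subst tri_sum) simp
  also have "\<dots> = (\<Sum>r<m. real (m choose r) * \<nu> r * (d * (\<Sum>j<m-r. real ((m-r) choose j) * Gf d j t)))"
  proof -
    have cm: "real (m choose (r+j)) * real ((r+j) choose r) = real (m choose r) * real ((m-r) choose j)"
      if "r < m" "j < m - r" for r j
    proof -
      have "(m choose (r+j)) * ((r+j) choose r) = (m choose r) * ((m - r) choose (r + j - r))"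
        using that by (intro choose_mult) auto
      then show ?thesis by (simp flip: of_nat_mult)
    qed
    have inner: "(\<Sum>j<m-r. real (m choose (r+j)) * real ((r+j) choose r) * Gf d (r+j-r) t * \<nu> r)
        = real (m choose r) * \<nu> r * (\<Sum>j<m-r. real ((m-r) choose j) * Gf d j t)" if "r < m" for r
    proof -
      have "(\<Sum>j<m-r. real (m choose (r+j)) * real ((r+j) choose r) * Gf d (r+j-r) t * \<nu> r)
          = (\<Sum>j<m-r. real (m choose r) * \<nu> r * (real ((m-r) choose j) * Gf d j t))"
        by (rule sum.cong[OF refl]) (simp add: cm[OF that] mult_ac)
      then show ?thesis by (simp add: sum_distrib_left)
    qed
    have "(\<Sum>r<m. \<Sum>j<m-r. real (m choose (r+j)) * real ((r+j) choose r) * Gf d (r+j-r) t * \<nu> r)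
        = (\<Sum>r<m. real (m choose r) * \<nu> r * (\<Sum>j<m-r. real ((m-r) choose j) * Gf d j t))"
      by (rule sum.cong[OF refl]) (rule inner, simp)
    then show ?thesis by (simp add: sum_distrib_left mult_ac)
  qed
  also have "\<dots> \<le> (\<Sum>r<m. real (m choose r) * \<nu> r * Gd d (m-r) t)"
  proof (rule sum_mono)
    fix r assume "r \<in> {..<m}"
    then have "1 \<le> m - r" by simp
    from super[OF d t this]
    have "d * (\<Sum>j<m-r. real ((m-r) choose j) * Gf d j t) \<le> Gd d (m-r) t" .
    moreover have "0 \<le> real (m choose r) * \<nu> r" using nu[of r] by simp
    ultimately show "real (m choose r) * \<nu> r * (d * (\<Sum>j<m-r. real ((m-r) choose j) * Gf d j t))
        \<le> real (m choose r) * \<nu> r * Gd d (m-r) t" by (rule mult_left_mono)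
  qed
  also have "\<dots> \<le> Pmd d \<nu> m t"
  proof -
    have "(\<Sum>r<m. real (m choose r) * \<nu> r * Gd d (m-r) t) = (\<Sum>r<Suc m. real (m choose r) * Gd d (m-r) t * \<nu> r)"
      by (simp add: Gd0 mult_ac)
    then show ?thesis unfolding Pmd_def by (simp add: lessThan_Suc_atMost)
  qed
  finally show ?thesis .
qed

lemma Pm_init: "(\<And>r. 0 \<le> \<nu> r) \<Longrightarrow> 0 \<le> d \<Longrightarrow> \<nu> m \<le> Pm d \<nu> m 0"
proof -
  assume nu: "\<And>r. 0 \<le> \<nu> r" and d: "0 \<le> d"
  have "\<nu> m = real (m choose m) * Gf d (m-m) 0 * \<nu> m" by (simp add: Gf_def)
  also have "\<dots> \<le> Pm d \<nu> m 0" unfolding Pm_def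
    by (rule member_le_sum) (auto intro!: mult_nonneg_nonneg Gf_nonneg nu d)
  finally show ?thesis .
qed


context grw begin

lemma U0: "Ut 0 \<psi> = \<psi>"
proof -
  have "(\<lambda>n. (0^n / fact n) *\<^sub>R vn \<psi> n) = (\<lambda>n. if n = 0 then vn \<psi> n else 0)" by (rule ext) simp
  then have "(\<lambda>n. (0^n / fact n) *\<^sub>R vn \<psi> n) sums vn \<psi> 0" using sums_single[of 0 "vn \<psi>"] by simp
  then show ?thesis unfolding Ut_def vn_0 by (rule sums_unique[symmetric])
qed

lemma hsq_deriv: "((\<lambda>s. (norm (Mw m (Ut s \<psi>)))^2) has_real_derivative
    2 * inner (Mw m (Ut t \<psi>)) (Mw m (Kop (Ut t \<psi>)))) (at t)"
proof -
  have d1: "((\<lambda>s. Mw m (Ut s \<psi>)) has_vector_derivative Mw m (Kop (Ut t \<psi>))) (at t)"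
    by (rule bounded_linear.has_vector_derivative[OF bl_Mw U_deriv])
  then have d1': "((\<lambda>s. Mw m (Ut s \<psi>)) has_derivative (\<lambda>h. h *\<^sub>R Mw m (Kop (Ut t \<psi>)))) (at t)"
    unfolding has_vector_derivative_def .
  have "((\<lambda>s. inner (Mw m (Ut s \<psi>)) (Mw m (Ut s \<psi>))) has_derivative
     (\<lambda>h. inner (Mw m (Ut t \<psi>)) (h *\<^sub>R Mw m (Kop (Ut t \<psi>))) + inner (h *\<^sub>R Mw m (Kop (Ut t \<psi>))) (Mw m (Ut t \<psi>)))) (at t)"
    by (rule has_derivative_inner[OF d1' d1'])
  then have "((\<lambda>s. inner (Mw m (Ut s \<psi>)) (Mw m (Ut s \<psi>))) has_derivative
     (\<lambda>h. (2 * inner (Mw m (Ut t \<psi>)) (Mw m (Kop (Ut t \<psi>)))) * h)) (at t)"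
  proof (rule has_derivative_eq_rhs)
    show "(\<lambda>h. inner (Mw m (Ut t \<psi>)) (h *\<^sub>R Mw m (Kop (Ut t \<psi>))) + inner (h *\<^sub>R Mw m (Kop (Ut t \<psi>))) (Mw m (Ut t \<psi>)))
        = (\<lambda>h. (2 * inner (Mw m (Ut t \<psi>)) (Mw m (Kop (Ut t \<psi>)))) * h)"
    proof
      fix h :: real
      have "inner (h *\<^sub>R Mw m (Kop (Ut t \<psi>))) (Mw m (Ut t \<psi>)) = h * inner (Mw m (Ut t \<psi>)) (Mw m (Kop (Ut t \<psi>)))"
        by (simp add: inner_commute[of "Mw m (Kop (Ut t \<psi>))"])
      then show "inner (Mw m (Ut t \<psi>)) (h *\<^sub>R Mw m (Kop (Ut t \<psi>))) + inner (h *\<^sub>R Mw m (Kop (Ut t \<psi>))) (Mw m (Ut t \<psi>))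
          = (2 * inner (Mw m (Ut t \<psi>)) (Mw m (Kop (Ut t \<psi>)))) * h" by simp
    qed
  qed
  then show ?thesis unfolding power2_norm_eq_inner has_field_derivative_def by simp
qed

definition nu :: "'v l2 \<Rightarrow> nat \<Rightarrow> real" where "nu \<psi> r = norm (Mw r \<psi>)"

lemma main_bound: "0 \<le> t \<Longrightarrow> norm (Mw m (Ut t \<psi>)) \<le> Pm (real D) (nu \<psi>) m t"
proof (induction m arbitrary: t rule: less_induct)
  case (less m)
  define h where "h s = norm (Mw m (Ut s \<psi>))" for s
  define q where "q s = real D * (\<Sum>k<m. real (m choose k) * norm (Mw k (Ut s \<psi>)))" for s
  define g' where "g' s = 2 * inner (Mw m (Ut s \<psi>)) (Mw m (Kop (Ut s \<psi>)))" for s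
  have "h t \<le> Pm (real D) (nu \<psi>) m t"
  proof (rule gronwall_sq[where g'=g' and q=q and Pd="Pmd (real D) (nu \<psi>) m" and h=h and P="Pm (real D) (nu \<psi>) m" and t=t])
    show "((\<lambda>s. (h s)^2) has_real_derivative g' s) (at s)" for s
      unfolding h_def g'_def by (rule hsq_deriv)
    show "g' s \<le> 2 * h s * q s" if "0 \<le> s" for s
    proof -
      let ?x = "Ut s \<psi>"
      have e1: "inner (Mw m ?x) (Mw m (Kop ?x)) = inner (Mw m ?x) (Kop (Mw m ?x)) + inner (Mw m ?x) (Mw m (Kop ?x) - Kop (Mw m ?x))"
        by (simp add: inner_diff_right)
      have e2: "inner (Mw m ?x) (Kop (Mw m ?x)) = 0" by (rule skew_Kop)
      have e3: "inner (Mw m ?x) (Mw m (Kop ?x) - Kop (Mw m ?x)) \<le> norm (Mw m ?x) * norm (Mw m (Kop ?x) - Kop (Mw m ?x))"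
        by (rule norm_cauchy_schwarz)
      have e4: "norm (Mw m ?x) * norm (Mw m (Kop ?x) - Kop (Mw m ?x)) \<le> norm (Mw m ?x) * q s"
        unfolding q_def by (intro mult_left_mono comm_bound) simp
      have "g' s = 2 * inner (Mw m ?x) (Mw m (Kop ?x))" unfolding g'_def ..
      moreover have "h s * q s = norm (Mw m ?x) * q s" unfolding h_def ..
      ultimately show "g' s \<le> 2 * h s * q s" using e1 e2 e3 e4 by linarith
    qed
    show "0 \<le> h s" for s unfolding h_def by simp
    show "0 \<le> q s" if "0 \<le> s" for s unfolding q_def by (intro mult_nonneg_nonneg sum_nonneg) auto
    show "q s \<le> Pmd (real D) (nu \<psi>) m s" if s0: "0 \<le> s" for s
    proof -
      have "q s \<le> real D * (\<Sum>k<m. real (m choose k) * Pm (real D) (nu \<psi>) k s)"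
        unfolding q_def
      proof (rule mult_left_mono)
        show "(\<Sum>k<m. real (m choose k) * norm (Mw k (Ut s \<psi>))) \<le> (\<Sum>k<m. real (m choose k) * Pm (real D) (nu \<psi>) k s)"
        proof (rule sum_mono)
          fix k assume "k \<in> {..<m}"
          then have "norm (Mw k (Ut s \<psi>)) \<le> Pm (real D) (nu \<psi>) k s" using less.IH s0 by simp
          then show "real (m choose k) * norm (Mw k (Ut s \<psi>)) \<le> real (m choose k) * Pm (real D) (nu \<psi>) k s"
            by (intro mult_left_mono) auto
        qed
      qed simp
      also have "\<dots> \<le> Pmd (real D) (nu \<psi>) m s" by (rule Pm_super) (auto simp: nu_def s0)
      finally show ?thesis .
    qed
    show "(Pm (real D) (nu \<psi>) m has_real_derivative Pmd (real D) (nu \<psi>) m s) (at s)" for s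
      by (rule Pm_deriv)
    show "h 0 \<le> Pm (real D) (nu \<psi>) m 0"
      using Pm_init[of "nu \<psi>" "real D" m] unfolding h_def U0 by (simp add: nu_def)
    show "0 \<le> t" by (rule less.prems)
  qed
  then show ?case unfolding h_def .
qed

end


lemma gdist_exists: "(x,y) \<in> (edges E)\<^sup>* \<Longrightarrow> (x, y) \<in> edges E ^^ gdist E x y"
  unfolding gdist_def by (rule LeastI_ex) (simp add: rtrancl_power)

lemma gdist_step:
  assumes "E x y" "(y, ob) \<in> (edges E)\<^sup>*"
  shows "gdist E x ob \<le> Suc (gdist E y ob)"
proof -
  have "(y, ob) \<in> edges E ^^ gdist E y ob" by (rule gdist_exists[OF assms(2)])
  moreover have "(x, y) \<in> edges E" using assms(1) by (simp add: edges_def)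
  ultimately have "(x, ob) \<in> edges E ^^ Suc (gdist E y ob)" by (intro relpow_Suc_I2)
  then show ?thesis unfolding gdist_def by (rule Least_le)
qed

lemma gdist_lip:
  assumes sym: "\<forall>x y. E x y \<longrightarrow> E y x" and conn: "\<forall>x y. (x, y) \<in> (edges E)\<^sup>*" and "E x y"
  shows "\<bar>real (gdist E x ob) - real (gdist E y ob)\<bar> \<le> 1"
proof -
  have "gdist E x ob \<le> Suc (gdist E y ob)" using assms by (intro gdist_step) auto
  moreover have "gdist E y ob \<le> Suc (gdist E x ob)" using assms by (intro gdist_step) auto
  ultimately show ?thesis by linarith
qed

lemma pow_le_1_plus: "real d ^ k \<le> 1 + real d ^ n" if "k \<le> n" for d :: nat
proof (cases "d = 0")
  case True then show ?thesis by (cases k) auto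
next
  case False
  then have "real d ^ k \<le> real d ^ n" using that by (intro power_increasing) auto
  then show ?thesis by simp
qed

lemma wfin_le:
  assumes "in_l2 \<psi>" "wfin E ob m \<psi>" "r \<le> m"
  shows "wfin E ob r \<psi>"
  unfolding wfin_def
proof (rule summable_on_comparison_test)
  show "(\<lambda>x. (cmod (\<psi> x))^2 + (real (gdist E x ob)) ^ (2 * m) * (cmod (\<psi> x))^2) summable_on UNIV"
    using assms unfolding in_l2_def wfin_def by (intro summable_on_add)
  fix x
  have "(real (gdist E x ob)) ^ (2 * r) \<le> 1 + (real (gdist E x ob)) ^ (2 * m)"
    using assms(3) by (intro pow_le_1_plus) auto
  then show "(real (gdist E x ob)) ^ (2 * r) * (cmod (\<psi> x))^2 \<le> (cmod (\<psi> x))^2 + (real (gdist E x ob)) ^ (2 * m) * (cmod (\<psi> x))^2"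
    by (metis distrib_right mult_1 mult_right_mono zero_le_power2)
  show "0 \<le> (real (gdist E x ob)) ^ (2 * r) * (cmod (\<psi> x))^2" by simp
qed

lemma wnorm_nonneg: "0 \<le> wnorm E ob m \<psi>" unfolding wnorm_def by (intro real_sqrt_ge_zero infsum_nonneg) simp

context gr begin

lemma key:
  assumes symE: "\<forall>x y. E x y \<longrightarrow> E y x" and conn: "\<forall>x y. (x, y) \<in> (edges E)\<^sup>*"
    and psi: "in_l2 \<psi>" "wfin E ob m \<psi>" and t0: "0 \<le> t"
  shows "wfin E ob m (evol E V t \<psi>) \<and>
     wnorm E ob m (evol E V t \<psi>) \<le> (\<Sum>r\<le>m. real (m choose r) * Gf (real D) (m-r) t * wnorm E ob r \<psi>)"
proof -
  define R where "R = (\<Sum>r\<le>m. real (m choose r) * Gf (real D) (m-r) t * wnorm E ob r \<psi>)"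
  have R0: "0 \<le> R" unfolding R_def using t0
    by (intro sum_nonneg mult_nonneg_nonneg Gf_nonneg wnorm_nonneg) auto
  have sq: "sqs \<psi>" using psi(1) unfolding in_l2_def sqs_def .
  define \<Psi> where "\<Psi> = Abs_l2 \<psi>"
  have vP: "vec \<Psi> = \<psi>" unfolding \<Psi>_def using sq by simp
  have evU: "evol E V t \<psi> x = vec (Ut t \<Psi>) x" for x by (simp add: vec_Ut vP)
  have fin: "(\<Sum>x\<in>F. (real (gdist E x ob)) ^ (2 * m) * (cmod (evol E V t \<psi> x))^2) \<le> R^2"
    if "finite F" for F
  proof -
    define N where "N = Max (insert 0 ((\<lambda>x. gdist E x ob) ` F))"
    have dN: "gdist E x ob \<le> N" if "x \<in> F" for x
      unfolding N_def using \<open>finite F\<close> that by (intro Max_ge) auto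
    define w where "w x = min (real (gdist E x ob)) (real N)" for x
    interpret W: grw E V D B w "real N"
    proof unfold_locales
      fix x y assume "E x y"
      then have "\<bar>real (gdist E x ob) - real (gdist E y ob)\<bar> \<le> 1" by (rule gdist_lip[OF symE conn])
      then show "\<bar>w x - w y\<bar> \<le> 1" unfolding w_def by linarith
    qed (auto simp: w_def)
    have nuB: "W.nu \<Psi> r \<le> wnorm E ob r \<psi>" if "r \<le> m" for r
    proof -
      have wr: "wfin E ob r \<psi>" by (rule wfin_le[OF psi that])
      have "(norm (W.Mw r \<Psi>))^2 = (\<Sum>\<^sub>\<infinity>x. (cmod (vec (W.Mw r \<Psi>) x))^2)" by (rule norm_sq_l2)
      also have "\<dots> \<le> (\<Sum>\<^sub>\<infinity>x. (real (gdist E x ob)) ^ (2 * r) * (cmod (\<psi> x))^2)"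
      proof (rule infsum_mono)
        show "(\<lambda>x. (cmod (vec (W.Mw r \<Psi>) x))^2) summable_on UNIV" by (rule sqs_vec')
        show "(\<lambda>x. (real (gdist E x ob)) ^ (2 * r) * (cmod (\<psi> x))^2) summable_on UNIV"
          using wr unfolding wfin_def .
        fix x
        have w0: "0 \<le> w x" "w x \<le> real (gdist E x ob)" unfolding w_def by auto
        have "(cmod (vec (W.Mw r \<Psi>) x))^2 = (w x ^ r)^2 * (cmod (\<psi> x))^2"
          by (simp add: W.vec_Mw vP norm_mult norm_power power_mult_distrib abs_of_nonneg w0)
        also have "\<dots> \<le> (real (gdist E x ob) ^ r)^2 * (cmod (\<psi> x))^2"
          using w0 by (intro mult_right_mono power_mono) auto
        also have "\<dots> = (real (gdist E x ob)) ^ (2 * r) * (cmod (\<psi> x))^2"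
          by (simp add: power_mult[symmetric] mult.commute)
        finally show "(cmod (vec (W.Mw r \<Psi>) x))^2 \<le> (real (gdist E x ob)) ^ (2 * r) * (cmod (\<psi> x))^2" .
      qed
      also have "\<dots> = (wnorm E ob r \<psi>)^2" unfolding wnorm_def by (simp add: infsum_nonneg)
      finally show ?thesis unfolding W.nu_def by (rule power2_le_imp_le) (rule wnorm_nonneg)
    qed
    have mb: "norm (W.Mw m (Ut t \<Psi>)) \<le> R"
    proof -
      have "norm (W.Mw m (Ut t \<Psi>)) \<le> Pm (real D) (W.nu \<Psi>) m t" by (rule W.main_bound[OF t0])
      also have "\<dots> \<le> R" unfolding Pm_def R_def
        by (intro sum_mono mult_left_mono nuB mult_nonneg_nonneg Gf_nonneg t0) auto
      finally show ?thesis .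
    qed
    have "(\<Sum>x\<in>F. (real (gdist E x ob)) ^ (2 * m) * (cmod (evol E V t \<psi> x))^2)
        = (\<Sum>x\<in>F. (cmod (vec (W.Mw m (Ut t \<Psi>)) x))^2)"
    proof (rule sum.cong[OF refl])
      fix x assume "x \<in> F"
      then have wx: "w x = real (gdist E x ob)" unfolding w_def using dN by auto
      show "(real (gdist E x ob)) ^ (2 * m) * (cmod (evol E V t \<psi> x))^2 = (cmod (vec (W.Mw m (Ut t \<Psi>)) x))^2"
        by (simp add: W.vec_Mw wx evU norm_mult norm_power power_mult_distrib power_mult[symmetric] mult.commute)
    qed
    also have "\<dots> \<le> (norm (W.Mw m (Ut t \<Psi>)))^2" by (rule finite_sum_le_norm_sq[OF that])
    also have "\<dots> \<le> R^2" using mb by (intro power_mono) auto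
    finally show ?thesis .
  qed
  have summ: "wfin E ob m (evol E V t \<psi>)" unfolding wfin_def
    by (rule nonneg_bdd_above_summable_on) (use fin in \<open>auto intro!: bdd_aboveI\<close>)
  have "(\<Sum>\<^sub>\<infinity>x. (real (gdist E x ob)) ^ (2 * m) * (cmod (evol E V t \<psi> x))^2) \<le> R^2"
    by (rule infsum_le_finite_sums) (use summ fin in \<open>auto simp: wfin_def\<close>)
  then have "wnorm E ob m (evol E V t \<psi>) \<le> sqrt (R^2)" unfolding wnorm_def by (rule real_sqrt_le_mono)
  then show ?thesis using summ R0 unfolding R_def by simp
qed

end


definition pp :: "nat \<Rightarrow> real \<Rightarrow> nat \<Rightarrow> real poly" where
  "pp m d j = (if j = 0 then 1 else smult (real (m choose j)) ([:0, d:]^j + smult (Kc j) ([:1, d:]^(j-1))))"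

lemma poly_pp: "poly (pp m d j) t = real (m choose j) * Gf d j t"
  by (simp add: pp_def Gf_def poly_power mult.commute)

lemma degree_pp:
  assumes d: "d \<noteq> 0" and j: "j \<le> m"
  shows "degree (pp m d j) = j"
proof (cases "j = 0")
  case True then show ?thesis by (simp add: pp_def)
next
  case False
  have a: "degree ([:0, d:]^j) = j" using d by (simp add: degree_power_eq)
  have "degree (smult (Kc j) ([:1, d:]^(j-1))) \<le> degree ([:1, d:]^(j-1))" by (rule degree_smult_le)
  also have "\<dots> = j - 1" using d by (simp add: degree_power_eq)
  finally have b: "degree (smult (Kc j) ([:1, d:]^(j-1))) < degree ([:0, d:]^j)" using False a by simp
  have "degree ([:0, d:]^j + smult (Kc j) ([:1, d:]^(j-1))) = j"
    using degree_add_eq_left[OF b] a by simp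
  moreover have "real (m choose j) \<noteq> 0" using j by simp
  ultimately show ?thesis using False by (simp add: pp_def)
qed

lemma lead_pp:
  assumes d: "d \<noteq> 0"
  shows "lead_coeff (pp m d m) = d^m"
proof (cases "m = 0")
  case True then show ?thesis by (simp add: pp_def)
next
  case False
  have a: "degree ([:0, d:]^m) = m" using d by (simp add: degree_power_eq)
  have "degree (smult (Kc m) ([:1, d:]^(m-1))) \<le> degree ([:1, d:]^(m-1))" by (rule degree_smult_le)
  also have "\<dots> = m - 1" using d by (simp add: degree_power_eq)
  finally have b: "degree (smult (Kc m) ([:1, d:]^(m-1))) < degree ([:0, d:]^m)" using False a by simp
  have "lead_coeff ([:0, d:]^m + smult (Kc m) ([:1, d:]^(m-1))) = lead_coeff ([:0, d:]^m)"
    using lead_coeff_add_le[OF b] by (simp add: add.commute)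
  also have "\<dots> = d^m" using d by (simp add: lead_coeff_power)
  finally show ?thesis using False by (simp add: pp_def lead_coeff_smult)
qed

lemma Gf_large:
  fixes d t :: real
  assumes d: "0 \<le> d" and t: "1 \<le> t" and m: "1 \<le> m" and j: "j \<le> m"
  shows "Gf d j t \<le> (if j = m then (d*t)^m else 0) + (1 + Kc j) * (1 + d)^j * t^(m-1)"
proof (cases j)
  case 0
  then have "j \<noteq> m" using m by simp
  have "1 \<le> t^(m-1)" using t by (rule one_le_power)
  then show ?thesis using 0 \<open>j \<noteq> m\<close> by (simp add: Gf_def)
next
  case (Suc k)
  have t0: "0 \<le> t" using t by simp
  have km: "k \<le> m - 1" using Suc j by simp
  have p1: "Kc j * (1 + d*t)^k \<le> Kc j * (1 + d)^j * t^(m-1)"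
  proof -
    have "(1 + d*t)^k \<le> ((1 + d) * t)^k" using d t by (intro power_mono) (auto simp: algebra_simps)
    also have "\<dots> = (1 + d)^k * t^k" by (simp add: power_mult_distrib)
    also have "\<dots> \<le> (1 + d)^j * t^(m-1)"
      using d t km Suc by (intro mult_mono power_increasing) auto
    finally show ?thesis using Kc_nonneg[of j] by (simp add: mult_left_mono mult.assoc)
  qed
  have p2: "(d*t)^j \<le> (if j = m then (d*t)^m else 0) + (1 + d)^j * t^(m-1)"
  proof (cases "j = m")
    case True then show ?thesis using d t by simp
  next
    case False
    then have jm: "j \<le> m - 1" using j by simp
    have "(d*t)^j = d^j * t^j" by (simp add: power_mult_distrib)
    also have "\<dots> \<le> (1 + d)^j * t^(m-1)"
      using d t jm by (intro mult_mono power_mono power_increasing) auto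
    finally show ?thesis using False by simp
  qed
  have "Gf d j t = (d*t)^j + Kc j * (1 + d*t)^k" unfolding Gf_def Suc by simp
  also have "\<dots> \<le> (if j = m then (d*t)^m else 0) + (1 + d)^j * t^(m-1) + Kc j * (1 + d)^j * t^(m-1)"
    using p1 p2 by linarith
  also have "\<dots> = (if j = m then (d*t)^m else 0) + (1 + Kc j) * (1 + d)^j * t^(m-1)"
    by (simp add: algebra_simps)
  finally show ?thesis .
qed

theorem theoremA1:
  fixes E :: "'v::countable \<Rightarrow> 'v \<Rightarrow> bool" and V :: "'v \<Rightarrow> real"
    and D :: nat and ob :: 'v and m :: nat
  assumes sym: "\<forall>x y. E x y \<longrightarrow> E y x"
    and irrefl: "\<forall>x. \<not> E x x"
    and conn: "\<forall>x y. (x, y) \<in> (edges E)\<^sup>*"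
    and deg: "\<forall>x. finite {y. E x y} \<and> card {y. E x y} \<le> D"
    and D_pos: "D \<ge> 1"
    and Vbdd: "\<exists>B. \<forall>x. \<bar>V x\<bar> \<le> B"
  shows "(\<exists>p :: nat \<Rightarrow> real poly.
            (\<forall>k\<le>m. degree (p k) = k) \<and> p 0 = 1 \<and> lead_coeff (p m) = real D ^ m \<and>
            (\<forall>t \<ge> 0. \<forall>\<psi>. in_l2 \<psi> \<and> wfin E ob m \<psi> \<longrightarrow>
               wfin E ob m (evol E V t \<psi>) \<and>
               wnorm E ob m (evol E V t \<psi>)
                 \<le> (\<Sum>r\<le>m. poly (p (m - r)) t * wnorm E ob r \<psi>)))
       \<and> (\<forall>\<psi>. in_l2 \<psi> \<and> wfin E ob m \<psi> \<longrightarrow>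
            Limsup (at_top :: real filter) (\<lambda>t. ereal (wnorm E ob m (evol E V t \<psi>) / t ^ m))
              \<le> ereal (real D ^ m * l2norm \<psi>))"
proof -
  obtain B where VB: "\<forall>x. \<bar>V x\<bar> \<le> B" using Vbdd by blast
  interpret gr E V D B by unfold_locales (use sym deg VB in auto)
  define p where "p = pp m (real D)"
  have Dnz: "real D \<noteq> 0" using D_pos by simp
  have D0: "0 \<le> real D" by simp
  have keyb: "wfin E ob m (evol E V t \<psi>) \<and>
     wnorm E ob m (evol E V t \<psi>) \<le> (\<Sum>r\<le>m. real (m choose r) * Gf (real D) (m-r) t * wnorm E ob r \<psi>)"
    if "0 \<le> t" "in_l2 \<psi>" "wfin E ob m \<psi>" for t \<psi>
    by (rule key[OF assms(1) conn that(2,3,1)])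
  have P1: "\<forall>k\<le>m. degree (p k) = k" unfolding p_def using Dnz by (auto intro: degree_pp)
  have P2: "p 0 = 1" unfolding p_def by (simp add: pp_def)
  have P3: "lead_coeff (p m) = real D ^ m" unfolding p_def by (rule lead_pp[OF Dnz])
  have P4: "\<forall>t \<ge> 0. \<forall>\<psi>. in_l2 \<psi> \<and> wfin E ob m \<psi> \<longrightarrow>
               wfin E ob m (evol E V t \<psi>) \<and>
               wnorm E ob m (evol E V t \<psi>) \<le> (\<Sum>r\<le>m. poly (p (m - r)) t * wnorm E ob r \<psi>)"
  proof (intro allI impI)
    fix t :: real and \<psi> assume t0: "0 \<le> t" and h: "in_l2 \<psi> \<and> wfin E ob m \<psi>"
    have K: "wfin E ob m (evol E V t \<psi>) \<and>
       wnorm E ob m (evol E V t \<psi>) \<le> (\<Sum>r\<le>m. real (m choose r) * Gf (real D) (m-r) t * wnorm E ob r \<psi>)"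
      using keyb[OF t0] h by blast
    have "(\<Sum>r\<le>m. real (m choose r) * Gf (real D) (m-r) t * wnorm E ob r \<psi>) = (\<Sum>r\<le>m. poly (p (m - r)) t * wnorm E ob r \<psi>)"
    proof (rule sum.cong[OF refl])
      fix r assume "r \<in> {..m}"
      then have "m choose (m - r) = m choose r" using binomial_symmetric[of r m] by simp
      then show "real (m choose r) * Gf (real D) (m-r) t * wnorm E ob r \<psi> = poly (p (m - r)) t * wnorm E ob r \<psi>"
        unfolding p_def poly_pp by simp
    qed
    with K show "wfin E ob m (evol E V t \<psi>) \<and> wnorm E ob m (evol E V t \<psi>) \<le> (\<Sum>r\<le>m. poly (p (m - r)) t * wnorm E ob r \<psi>)"
      by simp
  qed
  have P5: "\<forall>\<psi>. in_l2 \<psi> \<and> wfin E ob m \<psi> \<longrightarrow>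
            Limsup (at_top :: real filter) (\<lambda>t. ereal (wnorm E ob m (evol E V t \<psi>) / t ^ m))
              \<le> ereal (real D ^ m * l2norm \<psi>)"
  proof (intro allI impI)
    fix \<psi> assume h: "in_l2 \<psi> \<and> wfin E ob m \<psi>"
    define n where "n r = wnorm E ob r \<psi>" for r
    have n0: "n 0 = l2norm \<psi>" unfolding n_def wnorm_def l2norm_def by simp
    have nn: "0 \<le> n r" for r unfolding n_def by (rule wnorm_nonneg)
    define C where "C = (\<Sum>r\<le>m. real (m choose r) * n r * ((1 + Kc (m-r)) * (1 + real D)^(m-r)))"
    have C0: "0 \<le> C" unfolding C_def using nn Kc_nonneg by (intro sum_nonneg mult_nonneg_nonneg) auto
    have ev: "\<forall>\<^sub>F t in at_top. wnorm E ob m (evol E V t \<psi>) / t^m \<le> real D^m * n 0 + C / t"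
    proof (rule eventually_mono[OF eventually_ge_at_top[of 1]])
      fix t :: real assume t1: "1 \<le> t"
      then have t0: "0 \<le> t" by simp
      have W: "wnorm E ob m (evol E V t \<psi>) \<le> (\<Sum>r\<le>m. real (m choose r) * Gf (real D) (m-r) t * n r)"
        using keyb[OF t0] h unfolding n_def by blast
      show "wnorm E ob m (evol E V t \<psi>) / t^m \<le> real D^m * n 0 + C / t"
      proof (cases "m = 0")
        case True
        then have "wnorm E ob m (evol E V t \<psi>) \<le> n 0" using W by simp
        moreover have "0 \<le> C / t" using C0 t0 by simp
        ultimately show ?thesis using True by simp
      next
        case False
        then have m1: "1 \<le> m" by simp
        have each: "real (m choose r) * Gf (real D) (m-r) t * n r \<le>
            (if r = 0 then n 0 * (real D * t)^m else 0) + real (m choose r) * n r * ((1 + Kc (m-r)) * (1 + real D)^(m-r)) * t^(m-1)"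
          if "r \<in> {..m}" for r
        proof -
          have rm: "r \<le> m" using that by simp
          have g: "Gf (real D) (m-r) t \<le> (if m - r = m then (real D * t)^m else 0) + (1 + Kc (m-r)) * (1 + real D)^(m-r) * t^(m-1)"
            by (rule Gf_large[OF D0 t1 m1]) simp
          have "real (m choose r) * Gf (real D) (m-r) t * n r = (real (m choose r) * n r) * Gf (real D) (m-r) t"
            by (simp add: mult_ac)
          also have "\<dots> \<le> (real (m choose r) * n r) * ((if m - r = m then (real D * t)^m else 0) + (1 + Kc (m-r)) * (1 + real D)^(m-r) * t^(m-1))"
            using nn[of r] g by (intro mult_left_mono) auto
          also have "\<dots> = (if r = 0 then n 0 * (real D * t)^m else 0) + real (m choose r) * n r * ((1 + Kc (m-r)) * (1 + real D)^(m-r)) * t^(m-1)"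
            using rm m1 by (cases "r = 0") (auto simp: algebra_simps)
          finally show ?thesis .
        qed
        have "wnorm E ob m (evol E V t \<psi>) \<le> (\<Sum>r\<le>m. (if r = 0 then n 0 * (real D * t)^m else 0) + real (m choose r) * n r * ((1 + Kc (m-r)) * (1 + real D)^(m-r)) * t^(m-1))"
          using W sum_mono[OF each] by (rule order_trans)
        also have "\<dots> = n 0 * (real D * t)^m + C * t^(m-1)"
          by (simp add: sum.distrib C_def sum_distrib_right)
        finally have Wb: "wnorm E ob m (evol E V t \<psi>) \<le> n 0 * (real D * t)^m + C * t^(m-1)" .
        have tm: "t^m = t * t^(m-1)" using m1 by (cases m) auto
        have tpos: "0 < t^m" using t1 by simp
        have "wnorm E ob m (evol E V t \<psi>) / t^m \<le> (n 0 * (real D * t)^m + C * t^(m-1)) / t^m"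
          using Wb tpos by (intro divide_right_mono) auto
        also have "\<dots> = n 0 * ((real D * t)^m / t^m) + C * (t^(m-1) / t^m)"
          by (simp add: add_divide_distrib)
        also have "(real D * t)^m / t^m = real D^m" using tpos t1 by (simp add: power_mult_distrib)
        also have "t^(m-1) / t^m = 1 / t"
        proof -
          have "0 < t^(m-1)" using t1 by simp
          then show ?thesis unfolding tm by simp
        qed
        also have "n 0 * real D^m + C * (1 / t) = real D^m * n 0 + C / t" by simp
        finally show ?thesis .
      qed
    qed
    have "Limsup at_top (\<lambda>t. ereal (wnorm E ob m (evol E V t \<psi>) / t ^ m)) \<le> Limsup at_top (\<lambda>t::real. ereal (real D^m * n 0 + C / t))"
      by (rule Limsup_mono) (use ev in \<open>eventually_elim, simp\<close>)
    also have "\<dots> = ereal (real D^m * n 0)"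
    proof (rule lim_imp_Limsup)
      show "\<not> trivial_limit (at_top :: real filter)" by simp
      have "((\<lambda>t::real. C / t) \<longlongrightarrow> 0) at_top"
        by (rule tendsto_divide_0[OF tendsto_const filterlim_at_top_imp_at_infinity[OF filterlim_ident]])
      then have "((\<lambda>t::real. real D^m * n 0 + C / t) \<longlongrightarrow> real D^m * n 0 + 0) at_top"
        by (intro tendsto_add tendsto_const)
      then show "((\<lambda>t::real. ereal (real D^m * n 0 + C / t)) \<longlongrightarrow> ereal (real D^m * n 0)) at_top"
        by (intro tendsto_ereal) simp
    qed
    finally show "Limsup at_top (\<lambda>t. ereal (wnorm E ob m (evol E V t \<psi>) / t ^ m)) \<le> ereal (real D ^ m * l2norm \<psi>)"
      unfolding n0 .
  qed
  show ?thesis using P1 P2 P3 P4 P5 by blast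
qed


end
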